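(* Let $\mathbb{T}$ be a time scale with $\sup\mathbb{T}=+\infty$ and $\bar\mu_\mathbb{T}:=\sup_{t\in\mathbb{T}}\mu_\mathbb{T}(t)<+\infty$, and let $A$ be a real $n\times n$ matrix such that the system $x^\Delta=Ax$ on $\mathbb{T}$ is positive. Then $x^\Delta=Ax$ is positively uniformly exponentially stable if and only if all coefficients of the characteristic polynomial $\chi_A(\lambda)=\det(\lambda I-A)$ are positive.
   Context: A time scale is a nonempty closed subset $\mathbb{T}\subset\mathbb{R}$. For $t\in\mathbb{T}$, $\sigma_\mathbb{T}(t)=\inf\{s\in\mathbb{T}:s>t\}$ and the graininess is $\mu_\mathbb{T}(t)=\sigma_\mathbb{T}(t)-t$. The delta derivative $f^\Delta(t)$ is the number such that for every $\varepsilon>0$ there is $\delta>0$ with $|f(\sigma_\mathbb{T}(t))-f(s)-f^\Delta(t)(\sigma_\mathbb{T}(t)-s)|\le\varepsilon|\sigma_\mathbb{T}(t)-s|$ for all $s\in\mathbb{T}$, $|s-t|<\delta$ (ordinary derivative on $\mathbb{R}$, forward difference quotient $(f(t+h)-f(t))/h$ on $h\mathbb{Z}$). For $t_0\in\mathbb{T}$ and $x_0\in\mathbb{R}^n$ the system $x^\Delta=Ax$ has a unique forward solution with $x(t_0)=x_0$. The system $x^\Delta=Ax$ is positive if for every $t_0\in\mathbb{T}$ and every $x_0\in\mathbb{R}^n_+$ (vectors with nonnegative entries) the solution with $x(t_0)=x_0$ stays in $\mathbb{R}^n_+$ for all $t\ge t_0$. It is positively uniformly exponentially stable if there exist $K\ge1$,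 $\alpha>0$ and an open neighborhood $V$ of $0$ in $\mathbb{R}^n$ such that for all $t_0\le t$ in $\mathbb{T}$ and all $x_0\in\mathbb{R}^n_+\cap V$ the solution with $x(t_0)=x_0$ satisfies $\|x(t)\|\le K e^{-\alpha(t-t_0)}\|x_0\|$. *)

theory Defs
  imports "HOL-Analysis.Analysis" "HOL-Computational_Algebra.Polynomial"
begin

definition time_scale :: "real set \<Rightarrow> bool" where
  "time_scale T \<longleftrightarrow> T \<noteq> {} \<and> closed T"

text \<open>Forward jump operator (with the convention sigma t = t at a maximum).\<close>
definition sigma_ts :: "real set \<Rightarrow> real \<Rightarrow> real" where
  "sigma_ts T t = (if {s\<in>T. s > t} = {} then t else Inf {s\<in>T. s > t})"

definition graininess :: "real set \<Rightarrow> real \<Rightarrow> real" where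
  "graininess T t = sigma_ts T t - t"

text \<open>Delta derivative of a vector-valued function at t on the time scale T.\<close>
definition has_delta_derivative ::
  "real set \<Rightarrow> (real \<Rightarrow> 'a::real_normed_vector) \<Rightarrow> real \<Rightarrow> 'a \<Rightarrow> bool" where
  "has_delta_derivative T f t D \<longleftrightarrow>
     (\<forall>\<epsilon>>0. \<exists>\<delta>>0. \<forall>s\<in>T. \<bar>s - t\<bar> < \<delta> \<longrightarrow>
        norm (f (sigma_ts T t) - f s - (sigma_ts T t - s) *\<^sub>R D) \<le> \<epsilon> * \<bar>sigma_ts T t - s\<bar>)"

text \<open>x is a forward solution of x^Delta = A x on T with x(t0) = x0: it satisfies the
  equation on the time scale T \<inter> [t0, \<infinity>).\<close>
definition forward_solution ::
  "real set \<Rightarrow> real^'n^'n \<Rightarrow> real \<Rightarrow> real^'n \<Rightarrow> (real \<Rightarrow> real^'n) \<Rightarrow> bool" where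
  "forward_solution T A t0 x0 x \<longleftrightarrow>
     x t0 = x0 \<and>
     (\<forall>t\<in>T. t0 \<le> t \<longrightarrow> has_delta_derivative {s\<in>T. t0 \<le> s} x t (A *v x t))"

definition nonneg_vec :: "real^'n \<Rightarrow> bool" where
  "nonneg_vec v \<longleftrightarrow> (\<forall>i. 0 \<le> v $ i)"

definition positive_system :: "real set \<Rightarrow> real^'n^'n \<Rightarrow> bool" where
  "positive_system T A \<longleftrightarrow>
     (\<forall>t0\<in>T. \<forall>x0. nonneg_vec x0 \<longrightarrow> (\<forall>x. forward_solution T A t0 x0 x \<longrightarrow>
        (\<forall>t\<in>T. t0 \<le> t \<longrightarrow> nonneg_vec (x t))))"

definition pos_unif_exp_stable :: "real set \<Rightarrow> real^'n^'n \<Rightarrow> bool" where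
  "pos_unif_exp_stable T A \<longleftrightarrow>
     (\<exists>K \<alpha> V. K \<ge> 1 \<and> \<alpha> > 0 \<and> open V \<and> (0::real^'n) \<in> V \<and>
        (\<forall>t0\<in>T. \<forall>t\<in>T. t0 \<le> t \<longrightarrow> (\<forall>x0. nonneg_vec x0 \<and> x0 \<in> V \<longrightarrow>
           (\<forall>x. forward_solution T A t0 x0 x \<longrightarrow>
               norm (x t) \<le> K * exp (- \<alpha> * (t - t0)) * norm x0))))"

text \<open>Characteristic polynomial det(lambda I - A).\<close>
definition charpoly :: "real^'n^'n \<Rightarrow> real poly" where
  "charpoly A = det (\<chi> i j. (if i = j then [:0, 1:] else 0) - [: A $ i $ j :])"

end

theory Submission
  imports Defs "HOL-Computational_Algebra.Fundamental_Theorem_Algebra"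
begin

(* ---- M ---- *)


lemma hom_sum_gen:
  assumes add: "\<And>a b. h (a+b) = h a + h b" and z: "h 0 = 0"
  shows "h (sum f S) = sum (\<lambda>x. h (f x)) S"
  by (induction S rule: infinite_finite_induct) (auto simp: add z)

lemma hom_prod_gen:
  assumes mult: "\<And>a b. h (a*b) = h a * h b" and one: "h 1 = 1"
  shows "h (prod f S) = prod (\<lambda>x. h (f x)) S"
  by (induction S rule: infinite_finite_induct) (auto simp: mult one)

lemma det_hom:
  fixes h :: "'a::comm_ring_1 \<Rightarrow> 'b::comm_ring_1"
  assumes add: "\<And>a b. h (a+b) = h a + h b" and mult: "\<And>a b. h (a*b) = h a * h b"
    and z: "h 0 = 0" and one: "h 1 = 1"
  shows "h (det M) = det (\<chi> i j. h (M$i$j))"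
proof -
  have neg: "h (-a) = - h a" for a
    using add[of a "-a"] z by (metis minus_unique right_minus)
  have sg: "h (of_int (sign p)) = of_int (sign p)" for p :: "'c \<Rightarrow> 'c"
    by (auto simp: sign_def neg one)
  show ?thesis unfolding det_def
    by (simp add: hom_sum_gen[of h, OF add z] hom_prod_gen[of h, OF mult one] mult sg)
qed

lemma charpoly_eval:
  "poly (charpoly A) s = det (\<chi> i j. (if i = j then s else 0) - A$i$j)"
proof -
  have "poly (charpoly A) s = det (\<chi> i j. poly ((\<chi> i j. (if i = j then [:0, 1:] else 0) - [: A $ i $ j :]) $ i $ j) s)"
    unfolding charpoly_def by (rule det_hom) (auto simp: poly_add poly_mult)
  also have "(\<chi> i j. poly ((\<chi> i j. (if i = j then [:0, 1:] else 0) - [: A $ i $ j :]) $ i $ j) s)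
     = (\<chi> i j. (if i = j then s else 0) - A$i$j)"
    by (auto simp: vec_eq_iff)
  finally show ?thesis .
qed

lemma map_poly_of_real_add:
  "map_poly (of_real :: real \<Rightarrow> complex) (p + q) = map_poly of_real p + map_poly of_real q"
  by (rule poly_eqI) (simp add: coeff_map_poly)

lemma map_poly_of_real_mult:
  "map_poly (of_real :: real \<Rightarrow> complex) (p * q) = map_poly of_real p * map_poly of_real q"
  by (rule poly_eqI) (simp add: coeff_map_poly coeff_mult)

lemma charpoly_eval_complex:
  "poly (map_poly of_real (charpoly A)) z = det (\<chi> i j. (if i = j then z else 0) - complex_of_real (A$i$j))"
proof -
  have "poly (map_poly of_real (charpoly A)) z =
     det (\<chi> i j. poly (map_poly of_real ((\<chi> i j. (if i = j then [:0, 1:] else 0) - [: A $ i $ j :]) $ i $ j)) z)"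
    unfolding charpoly_def
    by (rule det_hom[where h="\<lambda>p. poly (map_poly of_real p) z"])
       (auto simp: map_poly_of_real_add map_poly_of_real_mult)
  also have "(\<chi> i j. poly (map_poly of_real ((\<chi> i j. (if i = j then [:0, 1:] else 0) - [: A $ i $ j :]) $ i $ j)) z)
     = (\<chi> i j. (if i = j then z else 0) - complex_of_real (A$i$j))"
  proof -
    show ?thesis unfolding vec_eq_iff by (simp add: map_poly_pCons)
  qed
  finally show ?thesis .
qed

lemma charpoly_leibniz:
  fixes A :: "real^'n^'n"
  shows "charpoly A = (\<Sum>p\<in>{p. p permutes (UNIV::'n set)}.
     (if evenperm p then 1 else -1) * (\<Prod>i\<in>UNIV. (if i = p i then [:- A$i$i, 1:] else [: - A$i$(p i) :])))"
  unfolding charpoly_def det_def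
  by (intro sum.cong refl) (auto simp: sign_def intro!: prod.cong)

lemma degree_prod_perm:
  fixes A :: "real^'n^'n"
  shows "degree (\<Prod>i\<in>UNIV. (if i = p i then [:- A$i$i, 1:] else [: - A$i$(p i) :])) \<le> card {i. p i = i}"
proof -
  have "degree (\<Prod>i\<in>UNIV. (if i = p i then [:- A$i$i, 1:] else [: - A$i$(p i) :]))
     \<le> (\<Sum>i\<in>UNIV. degree (if i = p i then [:- A$i$i, 1:] else [: - A$i$(p i) :]))"
    using degree_prod_sum_le[of "UNIV::'n set" "\<lambda>i. (if i = p i then [:- A$i$i, 1:] else [: - A$i$(p i) :])"]
    by (simp add: o_def)
  also have "\<dots> \<le> (\<Sum>i\<in>UNIV. (if p i = i then 1 else 0))"
    by (intro sum_mono) auto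
  also have "\<dots> = card {i. p i = i}"
    by (simp add: sum.If_cases)
  finally show ?thesis .
qed

lemma charpoly_degree_coeff:
  fixes A :: "real^'n^'n"
  shows "degree (charpoly A) \<le> CARD('n)" "coeff (charpoly A) CARD('n) = 1"
proof -
  let ?Q = "\<lambda>p. (\<Prod>i\<in>UNIV. (if i = p i then [:- A$i$i, 1:] else [: - A$i$(p i) :]))"
  let ?T = "\<lambda>p. (if evenperm p then 1 else -1) * ?Q p"
  have degT: "degree (?T p) \<le> card {i. p i = i}" for p
    using degree_prod_perm[where A=A and p=p] by auto
  have "card {i. p i = i} \<le> CARD('n)" for p :: "'n \<Rightarrow> 'n"
    by (rule card_mono) auto
  then have dT: "degree (?T p) \<le> CARD('n)" for p using degT[of p] by (meson order.trans)
  show "degree (charpoly A) \<le> CARD('n)"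
    unfolding charpoly_leibniz by (rule degree_sum_le) (simp_all add: finite_permutations dT)
  have c0: "coeff (?T p) CARD('n) = 0" if "p \<noteq> id" for p
  proof -
    obtain i0 where i0: "p i0 \<noteq> i0" using \<open>p \<noteq> id\<close> by (auto simp: fun_eq_iff)
    have "{i. p i = i} \<subseteq> UNIV - {i0}" using i0 by auto
    then have "card {i. p i = i} \<le> card (UNIV - {i0})" by (intro card_mono) auto
    also have "\<dots> < CARD('n)" by (simp add: card_Diff_singleton)
    finally show ?thesis using degT[of p] by (intro coeff_eq_0) auto
  qed
  have qid: "?Q id = (\<Prod>i\<in>UNIV. [:- A$i$i, 1:])" by simp
  have "degree (?Q id) = CARD('n)"
    unfolding qid by (subst degree_prod_sum_eq) auto
  moreover have "lead_coeff (?Q id) = 1"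
    unfolding qid by (subst lead_coeff_prod) auto
  ultimately have cid: "coeff (?T id) CARD('n) = 1" by simp
  have "coeff (charpoly A) CARD('n) = (\<Sum>p\<in>{p. p permutes (UNIV::'n set)}. coeff (?T p) CARD('n))"
    unfolding charpoly_leibniz coeff_sum ..
  also have "\<dots> = coeff (?T id) CARD('n)"
    by (subst sum.remove[of _ id]) (auto simp: finite_permutations permutes_id c0 intro!: sum.neutral)
  finally show "coeff (charpoly A) CARD('n) = 1" using cid by simp
qed


(* ---- M4 ---- *)


definition croot :: "real poly \<Rightarrow> complex \<Rightarrow> bool" where
  "croot p z \<longleftrightarrow> poly (map_poly of_real p) z = 0"

lemma croot_mult: "croot (p * q) z \<longleftrightarrow> croot p z \<or> croot q z"
  by (simp add: croot_def map_poly_of_real_mult)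

lemma croot_real: "croot p (of_real a) \<longleftrightarrow> poly p a = 0"
proof -
  have "poly (map_poly of_real p) (of_real a) = (of_real (poly p a) :: complex)"
    by (induction p) (auto simp: map_poly_pCons)
  then show ?thesis by (simp add: croot_def)
qed

lemma coeff_nonneg_beyond:
  fixes q :: "real poly"
  assumes "\<forall>k \<le> degree q. coeff q k > 0"
  shows "coeff q k \<ge> 0"
  using assms by (cases "k \<le> degree q") (auto simp: coeff_eq_0 less_imp_le)

lemma pos_coeffs_lin:
  fixes q :: "real poly"
  assumes q: "\<forall>k \<le> degree q. coeff q k > 0" and a: "a > 0"
  shows "\<forall>k \<le> degree q + 1. coeff ([:a, 1:] * q) k > 0"
proof (intro allI impI)
  fix k assume k: "k \<le> degree q + 1"
  have nn: "coeff q j \<ge> 0" for j using coeff_nonneg_beyond[OF q] .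
  have e: "coeff ([:a, 1:] * q) k = a * coeff q k + (case k of 0 \<Rightarrow> 0 | Suc j \<Rightarrow> coeff q j)"
    by (simp add: mult_pCons_left coeff_pCons split: nat.split)
  show "coeff ([:a, 1:] * q) k > 0"
  proof (cases "k \<le> degree q")
    case True
    then have "a * coeff q k > 0" using q a by auto
    moreover have "(case k of 0 \<Rightarrow> 0 | Suc j \<Rightarrow> coeff q j) \<ge> 0" using nn by (auto split: nat.split)
    ultimately show ?thesis using e by linarith
  next
    case False
    then have "k = Suc (degree q)" using k by auto
    then show ?thesis using e q nn a by (simp add: coeff_eq_0)
  qed
qed

lemma pos_coeffs_quad:
  fixes q :: "real poly"
  assumes q: "\<forall>k \<le> degree q. coeff q k > 0" and a: "a > 0" and b: "b > 0"
  shows "\<forall>k \<le> degree q + 2. coeff ([:a, b, 1:] * q) k > 0"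
proof (intro allI impI)
  fix k assume k: "k \<le> degree q + 2"
  have nn: "coeff q j \<ge> 0" for j using coeff_nonneg_beyond[OF q] .
  have e: "coeff ([:a, b, 1:] * q) k = a * coeff q k + (case k of 0 \<Rightarrow> 0 | Suc j \<Rightarrow>
      b * coeff q j + (case j of 0 \<Rightarrow> 0 | Suc i \<Rightarrow> coeff q i))"
    by (simp add: mult_pCons_left coeff_pCons split: nat.split)
  have t2: "(case k of 0 \<Rightarrow> 0 | Suc j \<Rightarrow>
      b * coeff q j + (case j of 0 \<Rightarrow> 0 | Suc i \<Rightarrow> coeff q i)) \<ge> 0"
    using nn b by (auto split: nat.split)
  show "coeff ([:a, b, 1:] * q) k > 0"
  proof (cases "k \<le> degree q")
    case True
    then have "a * coeff q k > 0" using q a by auto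
    then show ?thesis using e t2 by linarith
  next
    case False
    then have k2: "k = Suc (degree q) \<or> k = Suc (Suc (degree q))" using k by auto
    then show ?thesis
    proof
      assume k1: "k = Suc (degree q)"
      have "b * coeff q (degree q) > 0" using q b by auto
      then show ?thesis using e k1 nn by (auto simp: coeff_eq_0 split: nat.split intro!: add_pos_nonneg)
    next
      assume k1: "k = Suc (Suc (degree q))"
      then show ?thesis using e q nn b by (auto simp: coeff_eq_0 split: nat.split)
    qed
  qed
qed

lemma pos_coeffs_of_roots:
  fixes p :: "real poly"
  assumes "lead_coeff p > 0" and "\<forall>z. croot p z \<longrightarrow> Re z < 0"
  shows "\<forall>k \<le> degree p. coeff p k > 0"
  using assms
proof (induction "degree p" arbitrary: p rule: less_induct)
  case less
  show ?case
  proof (cases "degree p = 0")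
    case True
    then show ?thesis using less.prems by auto
  next
    case False
    have p0: "p \<noteq> 0" using False by auto
    have dm: "degree (map_poly (of_real :: real \<Rightarrow> complex) p) = degree p"
      by (rule degree_map_poly) auto
    have "\<not> constant (poly (map_poly (of_real :: real \<Rightarrow> complex) p))"
      using False dm by (simp add: constant_degree)
    then obtain z :: complex where z: "croot p z"
      using fundamental_theorem_of_algebra unfolding croot_def by blast
    have rez: "Re z < 0" using less.prems z by auto
    show ?thesis
    proof (cases "Im z = 0")
      case True
      then have zr: "z = of_real (Re z)" by (simp add: complex_eq_iff)
      have "poly p (Re z) = 0" using z zr croot_real by metis
      then obtain q where pq: "p = [:- Re z, 1:] * q" using poly_eq_0_iff_dvd by blast
      have q0: "q \<noteq> 0" using p0 pq by auto
      have "degree ([:- Re z, 1:] * q) = degree [:- Re z, 1:] + degree q"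
        by (rule degree_mult_eq) (use q0 in auto)
      then have dq: "degree p = degree q + 1" using pq by simp
      have "lead_coeff ([:- Re z, 1:] * q) = lead_coeff [:- Re z, 1:] * lead_coeff q"
        by (rule lead_coeff_mult)
      then have lq: "lead_coeff q = lead_coeff p" using pq by simp
      have rq: "\<forall>w. croot q w \<longrightarrow> Re w < 0" using less.prems pq croot_mult by metis
      have "\<forall>k \<le> degree q. coeff q k > 0"
        using less.hyps[of q] dq lq rq less.prems by auto
      then show ?thesis using pos_coeffs_lin[of q "- Re z"] rez pq dq by simp
    next
      case False
      define Q :: "real poly" where "Q = [:(cmod z)^2, - 2 * Re z, 1:]"
      have Qz: "croot Q z"
      proof -
        have "poly (map_poly of_real Q) z = of_real ((cmod z)^2) - 2 * of_real (Re z) * z + z * z"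
          by (simp add: Q_def map_poly_pCons algebra_simps)
        also have "\<dots> = 0"
          using cmod_power2[of z] by (simp add: complex_eq_iff power2_eq_square algebra_simps)
        finally show ?thesis by (simp add: croot_def)
      qed
      have Q0: "Q \<noteq> 0" and dQ: "degree Q = 2" by (auto simp: Q_def)
      define r where "r = p mod Q"
      define q where "q = p div Q"
      have pqr: "p = q * Q + r" by (simp add: q_def r_def)
      have dr: "degree r \<le> 1"
      proof (cases "r = 0")
        case False
        then have "degree r < degree Q" unfolding r_def using Q0 by (intro degree_mod_less') auto
        then show ?thesis using dQ by simp
      qed simp
      have "croot r z"
      proof -
        have "poly (map_poly of_real p) z = poly (map_poly of_real q) z * poly (map_poly of_real Q) z
             + poly (map_poly of_real r) z"
          by (subst pqr) (simp add: map_poly_of_real_add map_poly_of_real_mult)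
        then show ?thesis using z Qz by (simp add: croot_def)
      qed
      moreover have "r = [:coeff r 0, coeff r 1:]"
        by (rule poly_eqI) (use dr in \<open>auto simp: coeff_pCons coeff_eq_0 split: nat.split\<close>)
      ultimately have "poly (map_poly of_real [:coeff r 0, coeff r 1:]) z = 0"
        unfolding croot_def by simp
      then have "complex_of_real (coeff r 0) + complex_of_real (coeff r 1) * z = 0"
        by (simp add: map_poly_pCons mult.commute)
      then have "coeff r 1 * Im z = 0" "coeff r 0 + coeff r 1 * Re z = 0"
        by (simp_all add: complex_eq_iff)
      then have "coeff r 1 = 0" "coeff r 0 = 0" using False by auto
      then have r0: "r = 0" using \<open>r = [:coeff r 0, coeff r 1:]\<close> by simp
      have pq: "p = Q * q" using pqr r0 by (simp add: mult.commute)
      have q0: "q \<noteq> 0" using p0 pq by auto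
      have "degree (Q * q) = degree Q + degree q"
        by (rule degree_mult_eq) (use q0 Q0 in auto)
      then have dq: "degree p = degree q + 2" using pq dQ by simp
      have "lead_coeff (Q * q) = lead_coeff Q * lead_coeff q" by (rule lead_coeff_mult)
      moreover have "lead_coeff Q = 1" by (simp add: Q_def)
      ultimately have lq: "lead_coeff q = lead_coeff p" using pq by simp
      have rq: "\<forall>w. croot q w \<longrightarrow> Re w < 0" using less.prems pq croot_mult by metis
      have "\<forall>k \<le> degree q. coeff q k > 0"
        using less.hyps[of q] dq lq rq less.prems by auto
      moreover have "(cmod z)^2 > 0" using False by (auto simp: complex_eq_iff)
      ultimately show ?thesis using pos_coeffs_quad[of q "(cmod z)^2" "- 2 * Re z"] rez pq dq
        by (simp add: Q_def)
    qed
  qed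
qed


(* ---- M5 ---- *)


definition metzler :: "real^'n^'n \<Rightarrow> bool" where
  "metzler N \<longleftrightarrow> (\<forall>i j. i \<noteq> j \<longrightarrow> 0 \<le> N$i$j)"

definition eigpair :: "real^'n^'n \<Rightarrow> bool" where
  "eigpair N \<longleftrightarrow> (\<exists>w s. nonneg_vec w \<and> w \<noteq> 0 \<and> s \<ge> 0 \<and> N *v w = s *\<^sub>R w)"

lemma mv_nth: "(N *v w) $ i = (\<Sum>j\<in>UNIV. N$i$j * w$j)"
  by (simp add: matrix_vector_mult_def)

lemma vm_nth: fixes N :: "real^'n^'m" shows "(v v* N) $ j = (\<Sum>i\<in>UNIV. N$i$j * v$i)"
  unfolding vector_matrix_mult_def by simp (rule sum.cong, auto)

lemma metzler_diag_bound:
  fixes N :: "real^'n^'n"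
  assumes met: "metzler N" and u: "nonneg_vec u"
  shows "(N *v u)$i \<ge> N$i$i * u$i"
proof -
  have "(N *v u)$i = N$i$i * u$i + (\<Sum>j\<in>UNIV-{i}. N$i$j * u$j)"
    unfolding mv_nth by (subst sum.remove[of _ i]) auto
  moreover have "(\<Sum>j\<in>UNIV-{i}. N$i$j * u$j) \<ge> 0"
    using met u by (intro sum_nonneg) (auto simp: metzler_def nonneg_vec_def)
  ultimately show ?thesis by linarith
qed

lemma brouwer_eig:
  fixes N :: "real^'n^'n"
  assumes met: "metzler N" and y: "nonneg_vec y" "y \<noteq> 0" "nonneg_vec (N *v y)"
  shows "eigpair N"
proof -
  define c where "c = 1 + (\<Sum>i\<in>UNIV. \<bar>N$i$i\<bar>)"
  have cN: "N$i$i + c \<ge> 1" for i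
  proof -
    have "\<bar>N$i$i\<bar> \<le> (\<Sum>i\<in>UNIV. \<bar>N$i$i\<bar>)"
      by (rule member_le_sum) auto
    then show ?thesis unfolding c_def by linarith
  qed
  have c0: "c \<ge> 0" unfolding c_def by (simp add: sum_nonneg add_nonneg_nonneg)
  define B where "B w = N *v w + c *\<^sub>R w" for w
  have Bge: "(B u)$i \<ge> u$i" if "nonneg_vec u" for u i
  proof -
    have "(N *v u)$i \<ge> N$i$i * u$i" by (rule metzler_diag_bound[OF met that])
    moreover have "(N$i$i + c) * u$i \<ge> 1 * u$i"
      using cN that by (intro mult_right_mono) (auto simp: nonneg_vec_def)
    ultimately show ?thesis by (simp add: B_def algebra_simps)
  qed
  define K where "K = {w. nonneg_vec w \<and> sum (\<lambda>i. w$i) UNIV = 1 \<and> nonneg_vec (N *v w)}"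
  define s where "s w = sum (\<lambda>i. (B w)$i) UNIV" for w
  define f where "f w = (1 / s w) *\<^sub>R B w" for w
  have sge: "s w \<ge> 1" if "w \<in> K" for w
  proof -
    have "s w \<ge> sum (\<lambda>i. w$i) UNIV" unfolding s_def
      using that by (intro sum_mono Bge) (auto simp: K_def)
    then show ?thesis using that by (auto simp: K_def)
  qed
  have closedK: "closed K"
  proof -
    have "K = (\<Inter>i. {w. 0 \<le> w$i}) \<inter> {w. sum (\<lambda>i. w$i) UNIV = 1} \<inter> (\<Inter>i. {w. 0 \<le> (N *v w)$i})"
      by (auto simp: K_def nonneg_vec_def)
    moreover have "closed {w::real^'n. sum (\<lambda>i. w$i) UNIV = 1}"
      by (intro closed_Collect_eq continuous_intros)
    moreover have "closed {w::real^'n. 0 \<le> (N *v w)$i}" for i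
    proof -
      have "continuous_on UNIV (\<lambda>w::real^'n. (N *v w)$i)"
        by (intro continuous_intros matrix_vector_mult_linear_continuous_on)
      then show ?thesis
        by (intro closed_Collect_le) (auto simp: continuous_on_const)
    qed
    moreover have "closed {w::real^'n. 0 \<le> w$i}" for i
      by (intro closed_Collect_le continuous_intros)
    ultimately show ?thesis by (metis closed_Int closed_INT)
  qed
  have boundedK: "bounded K"
  proof -
    have "norm w \<le> 1" if "w \<in> K" for w
    proof -
      have "norm w \<le> (\<Sum>i\<in>UNIV. \<bar>w$i\<bar>)" by (rule norm_le_l1_cart)
      also have "\<dots> = 1" using that by (auto simp: K_def nonneg_vec_def)
      finally show ?thesis .
    qed
    then show ?thesis unfolding bounded_iff by blast
  qed
  have convexK: "convex K"
  proof (rule convexI)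
    fix x z :: "real^'n" and a b :: real
    assume x: "x \<in> K" and z: "z \<in> K" and a: "0 \<le> a" and b: "0 \<le> b" and ab: "a + b = 1"
    have "N *v (a *\<^sub>R x + b *\<^sub>R z) = a *\<^sub>R (N *v x) + b *\<^sub>R (N *v z)"
      by (simp add: matrix_vector_right_distrib matrix_vector_mult_scaleR)
    moreover have "sum (\<lambda>i. (a *\<^sub>R x + b *\<^sub>R z)$i) UNIV = a * sum (\<lambda>i. x$i) UNIV + b * sum (\<lambda>i. z$i) UNIV"
      by (simp add: sum.distrib sum_distrib_left)
    ultimately show "a *\<^sub>R x + b *\<^sub>R z \<in> K"
      using x z a b ab by (auto simp: K_def nonneg_vec_def)
  qed
  have y1: "sum (\<lambda>i. y$i) UNIV > 0"
  proof -
    obtain i where "y$i \<noteq> 0" using y(2) by (auto simp: vec_eq_iff)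
    then have "y$i > 0" using y(1) by (auto simp: nonneg_vec_def order.order_iff_strict)
    moreover have "y$i \<le> sum (\<lambda>i. y$i) UNIV"
      using y(1) by (intro member_le_sum) (auto simp: nonneg_vec_def)
    ultimately show ?thesis by linarith
  qed
  have Kne: "K \<noteq> {}"
  proof -
    let ?y = "(1 / sum (\<lambda>i. y$i) UNIV) *\<^sub>R y"
    have "N *v ?y = (1 / sum (\<lambda>i. y$i) UNIV) *\<^sub>R (N *v y)"
      by (simp add: matrix_vector_mult_scaleR)
    then have "?y \<in> K" using y y1
      by (auto simp: K_def nonneg_vec_def sum_divide_distrib[symmetric])
    then show ?thesis by blast
  qed
  have contf: "continuous_on K f"
  proof -
    have cB: "continuous_on K B" unfolding B_def
      by (intro continuous_intros matrix_vector_mult_linear_continuous_on[THEN continuous_on_subset]) auto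
    have cs: "continuous_on K s" unfolding s_def
      by (intro continuous_intros continuous_on_compose2[OF _ cB]) auto
    show ?thesis unfolding f_def
      using sge by (intro continuous_intros cs cB) force
  qed
  have fK: "f \<in> K \<rightarrow> K"
  proof
    fix w assume w: "w \<in> K"
    have sw: "s w \<ge> 1" using sge[OF w] .
    have wnn: "nonneg_vec w" using w by (auto simp: K_def)
    have Nw: "nonneg_vec (N *v w)" using w by (auto simp: K_def)
    have "nonneg_vec (f w)"
      using Bge[OF wnn] wnn sw by (auto simp: f_def nonneg_vec_def intro!: divide_nonneg_nonneg intro: order.trans)
    moreover have "sum (\<lambda>i. (f w)$i) UNIV = 1"
      using sw by (simp add: f_def s_def sum_divide_distrib[symmetric])
    moreover have "nonneg_vec (N *v f w)"
    proof -
      have "N *v f w = (1 / s w) *\<^sub>R B (N *v w)"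
        by (simp add: f_def B_def matrix_vector_mult_scaleR matrix_vector_right_distrib)
      then show ?thesis using Bge[OF Nw] Nw sw
        by (auto simp: nonneg_vec_def intro!: divide_nonneg_nonneg intro: order.trans)
    qed
    ultimately show "f w \<in> K" by (auto simp: K_def)
  qed
  obtain w where w: "w \<in> K" "f w = w"
    using brouwer[OF compact_eq_bounded_closed[THEN iffD2, OF conjI[OF boundedK closedK]] convexK Kne contf fK]
    by blast
  have sw: "s w \<ge> 1" using sge[OF w(1)] .
  have "B w = s w *\<^sub>R w"
  proof -
    have "B w = s w *\<^sub>R f w" using sw by (simp add: f_def)
    then show ?thesis using w(2) by simp
  qed
  then have Nw: "N *v w = (s w - c) *\<^sub>R w" by (simp add: B_def algebra_simps)
  have wnn: "nonneg_vec w" and ws: "sum (\<lambda>i. w$i) UNIV = 1" and Nwn: "nonneg_vec (N *v w)"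
    using w(1) by (auto simp: K_def)
  have w0: "w \<noteq> 0" using ws by auto
  obtain i where "w$i \<noteq> 0" using w0 by (auto simp: vec_eq_iff)
  then have wi: "w$i > 0" using wnn by (auto simp: nonneg_vec_def order.order_iff_strict)
  have "(s w - c) * w$i \<ge> 0" using Nwn Nw by (auto simp: nonneg_vec_def vec_eq_iff)
  then have "s w - c \<ge> 0" using wi by (simp add: zero_le_mult_iff)
  then show ?thesis unfolding eigpair_def using wnn w0 Nw by blast
qed

lemma gordan:
  fixes N :: "real^'n^'n"
  assumes no: "\<not> (\<exists>y. nonneg_vec y \<and> y \<noteq> 0 \<and> nonneg_vec (N *v y))"
  shows "\<exists>v. (\<forall>i. v$i > 0) \<and> (\<forall>j. (v v* N)$j < 0)"
proof -
  define D where "D = {y::real^'n. nonneg_vec y \<and> sum (\<lambda>i. y$i) UNIV = 1}"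
  define S where "S = (\<lambda>y. N *v y) ` D"
  define P where "P = {u::real^'n. nonneg_vec u}"
  have closedD: "closed D"
  proof -
    have "D = (\<Inter>i. {w. 0 \<le> w$i}) \<inter> {w. sum (\<lambda>i. w$i) UNIV = 1}"
      by (auto simp: D_def nonneg_vec_def)
    moreover have "closed {w::real^'n. sum (\<lambda>i. w$i) UNIV = 1}"
      by (intro closed_Collect_eq continuous_intros)
    moreover have "closed {w::real^'n. 0 \<le> w$i}" for i
      by (intro closed_Collect_le continuous_intros)
    ultimately show ?thesis by (metis closed_Int closed_INT)
  qed
  have boundedD: "bounded D"
  proof -
    have "norm w \<le> 1" if "w \<in> D" for w
    proof -
      have "norm w \<le> (\<Sum>i\<in>UNIV. \<bar>w$i\<bar>)" by (rule norm_le_l1_cart)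
      also have "\<dots> = 1" using that by (auto simp: D_def nonneg_vec_def)
      finally show ?thesis .
    qed
    then show ?thesis unfolding bounded_iff by blast
  qed
  have convexD: "convex D"
  proof (rule convexI)
    fix x z :: "real^'n" and a b :: real
    assume x: "x \<in> D" and z: "z \<in> D" and a: "0 \<le> a" and b: "0 \<le> b" and ab: "a + b = 1"
    have "sum (\<lambda>i. (a *\<^sub>R x + b *\<^sub>R z)$i) UNIV = a * sum (\<lambda>i. x$i) UNIV + b * sum (\<lambda>i. z$i) UNIV"
      by (simp add: sum.distrib sum_distrib_left)
    then show "a *\<^sub>R x + b *\<^sub>R z \<in> D"
      using x z a b ab by (auto simp: D_def nonneg_vec_def)
  qed
  have axD: "axis j 1 \<in> D" for j
    by (auto simp: D_def nonneg_vec_def axis_def)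
  have lin: "linear ((*v) N)" by (rule matrix_vector_mul_linear)
  have convexS: "convex S" unfolding S_def by (rule convex_linear_image[OF lin convexD])
  have compactS: "compact S" unfolding S_def
    by (intro compact_continuous_image matrix_vector_mult_linear_continuous_on
        compact_eq_bounded_closed[THEN iffD2] conjI boundedD closedD)
  have Sne: "S \<noteq> {}" using axD by (auto simp: S_def)
  have convexP: "convex P" by (rule convexI) (auto simp: P_def nonneg_vec_def)
  have closedP: "closed P"
  proof -
    have "P = (\<Inter>i. {w. 0 \<le> w$i})" by (auto simp: P_def nonneg_vec_def)
    moreover have "closed {w::real^'n. 0 \<le> w$i}" for i
      by (intro closed_Collect_le continuous_intros)
    ultimately show ?thesis by (metis closed_INT)
  qed
  have disj: "S \<inter> P = {}"
  proof -
    have "y \<noteq> 0" if "y \<in> D" for y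
      using that by (auto simp: D_def)
    then show ?thesis using no by (auto simp: S_def P_def D_def)
  qed
  obtain a b where ab1: "\<forall>x\<in>S. inner a x < b" and ab2: "\<forall>x\<in>P. inner a x > b"
    using separating_hyperplane_compact_closed[OF convexS compactS Sne convexP closedP disj] by blast
  have b0: "b < 0" using ab2[rule_format, of 0] by (auto simp: P_def nonneg_vec_def)
  have a0: "a$i \<ge> 0" for i
  proof (rule ccontr)
    assume "\<not> a$i \<ge> 0"
    then have ai: "a$i < 0" by simp
    have "axis i (b / a$i) \<in> P" using ai b0
      by (auto simp: P_def nonneg_vec_def axis_def intro: divide_nonpos_neg)
    moreover have "inner a (axis i (b / a$i)) = b"
      using ai by (simp add: inner_axis)
    ultimately show False using ab2 by fastforce
  qed
  have aN: "(a v* N)$j < b" for j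
  proof -
    have "N *v axis j 1 \<in> S" using axD by (auto simp: S_def)
    then have "inner a (N *v axis j 1) < b" using ab1 by blast
    moreover have "inner a (N *v axis j 1) = (a v* N)$j"
      by (simp add: dot_lmul_matrix[symmetric] inner_axis)
    ultimately show ?thesis by simp
  qed
  define C where "C = 1 + (\<Sum>i\<in>UNIV. \<Sum>j\<in>UNIV. \<bar>N$i$j\<bar>)"
  have C1: "C \<ge> 1" unfolding C_def by (simp add: sum_nonneg)
  define eta where "eta = - b / (2 * C)"
  have eta0: "eta > 0" unfolding eta_def using b0 C1 divide_pos_pos[of "-b" "2*C"] by simp
  define v where "v = a + eta *\<^sub>R vec 1"
  have "v$i > 0" for i using a0[of i] eta0 by (simp add: v_def)
  moreover have "(v v* N)$j < 0" for j
  proof -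
    have "(v v* N)$j = (a v* N)$j + eta * (\<Sum>i\<in>UNIV. N$i$j)"
      by (simp add: v_def vm_nth algebra_simps sum.distrib sum_distrib_left)
    moreover have "\<bar>\<Sum>i\<in>UNIV. N$i$j\<bar> \<le> C"
    proof -
      have "\<bar>\<Sum>i\<in>UNIV. N$i$j\<bar> \<le> (\<Sum>i\<in>UNIV. \<bar>N$i$j\<bar>)" by (rule sum_abs)
      also have "\<dots> \<le> (\<Sum>i\<in>UNIV. \<Sum>j\<in>UNIV. \<bar>N$i$j\<bar>)"
        by (intro sum_mono member_le_sum) auto
      finally show ?thesis unfolding C_def by linarith
    qed
    then have "eta * (\<Sum>i\<in>UNIV. N$i$j) \<le> eta * C"
      using eta0 by (intro mult_left_mono) auto
    moreover have "eta * C = - b / 2" unfolding eta_def using C1 by (simp add: field_simps)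
    ultimately show ?thesis using aN[of j] b0 by linarith
  qed
  ultimately show ?thesis by blast
qed

lemma gershgorin_left:
  fixes N :: "real^'n^'n"
  assumes met: "metzler N" and v: "\<forall>i. v$i > 0" and neg: "\<forall>j. (v v* N)$j < 0"
    and z: "croot (charpoly N) z"
  shows "Re z < 0"
proof -
  define M where "M = (\<chi> i j. (if i = j then z else 0) - complex_of_real (N$i$j))"
  have "det M = 0" using z unfolding croot_def M_def charpoly_eval_complex .
  then have "det (matrix ((*v) (transpose M))) = 0" by (simp add: matrix_of_matrix_vector_mul)
  then have "\<not> inj ((*v) (transpose M))"
    using det_nz_iff_inj_gen[of "(*v) (transpose M)"] matrix_vector_mul_linear_gen by blast
  then obtain x where x: "transpose M *v x = 0" "x \<noteq> 0"
    using vec.linear_inj_iff_eq_0[OF matrix_vector_mul_linear_gen] by blast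
  define g where "g i = norm (x$i) / v$i" for i
  obtain j where j: "\<forall>i. g i \<le> g j"
  proof -
    have "Max (range g) \<in> range g" by (rule Max_in) auto
    then obtain j where "Max (range g) = g j" by blast
    moreover have "g i \<le> Max (range g)" for i by (rule Max_ge) auto
    ultimately show ?thesis using that[of j] by auto
  qed
  have xj: "norm (x$j) > 0"
  proof (rule ccontr)
    assume "\<not> norm (x$j) > 0"
    then have "g j = 0" by (simp add: g_def)
    then have "norm (x$i) / v$i \<le> 0" for i using j[rule_format, of i] unfolding g_def by linarith
    then have "norm (x$i) \<le> 0" for i using v[rule_format, of i]
      by (metis divide_le_0_iff not_less norm_ge_zero order.strict_iff_not)
    then have "x$i = 0" for i by simp
    then show False using x(2) by (auto simp: vec_eq_iff)
  qed
  have xi: "norm (x$i) \<le> g j * v$i" for i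
    using j[rule_format, of i] v[rule_format, of i] by (simp add: g_def field_simps)
  have eq: "(\<Sum>i\<in>UNIV. M$i$j * x$i) = 0"
    using x(1) by (simp add: vec_eq_iff matrix_vector_mult_def transpose_def mult.commute)
  have "(\<Sum>i\<in>UNIV. M$i$j * x$i) = M$j$j * x$j + (\<Sum>i\<in>UNIV-{j}. M$i$j * x$i)"
    by (subst sum.remove[of _ j]) auto
  then have e2: "(z - of_real (N$j$j)) * x$j = (\<Sum>i\<in>UNIV-{j}. of_real (N$i$j) * x$i)"
    using eq by (simp add: M_def sum_negf algebra_simps eq_neg_iff_add_eq_0 del: sum.insert_remove)
  have "norm ((z - of_real (N$j$j)) * x$j) \<le> (\<Sum>i\<in>UNIV-{j}. norm (of_real (N$i$j) * x$i))"
    unfolding e2 by (rule norm_sum)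
  also have "\<dots> \<le> (\<Sum>i\<in>UNIV-{j}. N$i$j * (g j * v$i))"
  proof (rule sum_mono)
    fix i assume "i \<in> UNIV - {j}"
    then have "N$i$j \<ge> 0" using met by (auto simp: metzler_def)
    then show "norm (complex_of_real (N$i$j) * x$i) \<le> N$i$j * (g j * v$i)"
      using xi[of i] by (simp add: norm_mult mult_left_mono)
  qed
  also have "\<dots> = g j * ((v v* N)$j - N$j$j * v$j)"
  proof -
    have "(v v* N)$j = N$j$j * v$j + (\<Sum>i\<in>UNIV-{j}. N$i$j * v$i)"
      unfolding vm_nth by (subst sum.remove[of _ j]) auto
    then show ?thesis by (simp add: sum_distrib_left algebra_simps)
  qed
  also have "\<dots> < g j * (- N$j$j * v$j)"
    using neg[rule_format, of j] xj v by (intro mult_strict_left_mono) (auto simp: g_def)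
  also have "\<dots> = - N$j$j * norm (x$j)"
    using v[rule_format, of j] by (simp add: g_def)
  finally have "norm (z - of_real (N$j$j)) * norm (x$j) < - N$j$j * norm (x$j)"
    by (simp add: norm_mult)
  then have "norm (z - of_real (N$j$j)) * norm (x$j) < (- N$j$j) * norm (x$j)" by simp
  then have "norm (z - of_real (N$j$j)) < - N$j$j"
    using xj by (meson less_imp_le mult_right_less_imp_less)
  moreover have "Re z - N$j$j \<le> norm (z - of_real (N$j$j))"
    using complex_Re_le_cmod[of "z - of_real (N$j$j)"] by simp
  ultimately show ?thesis by linarith
qed

lemma eigpair_root:
  fixes A :: "real^'n^'n"
  assumes "A *v w = s *\<^sub>R w" "w \<noteq> 0"
  shows "poly (charpoly A) s = 0"
proof -
  define M where "M = (\<chi> i j. (if i = j then s else 0) - A$i$j)"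
  have "(M *v w)$i = 0" for i
  proof -
    have e: "(if i = j then s else 0) * w$j = (if i = j then s * w$j else 0)" for j by simp
    have "(M *v w)$i = (\<Sum>j\<in>UNIV. (if i = j then s * w$j else 0)) - (A *v w)$i"
      by (simp add: M_def matrix_vector_mult_def left_diff_distrib sum_subtractf e)
    also have "\<dots> = 0" using assms(1) by (simp add: vec_eq_iff)
    finally show ?thesis .
  qed
  then have "M *v w = 0" by (simp add: vec_eq_iff)
  then have "\<not> inj ((*v) M)" using assms(2) by (metis matrix_vector_mult_0_right injD)
  then have "det (matrix ((*v) M)) = 0"
    using det_nz_iff_inj_gen[of "(*v) M"] matrix_vector_mul_linear_gen by blast
  then show ?thesis by (simp add: charpoly_eval M_def matrix_of_matrix_vector_mul)
qed

lemma charpoly_pos: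
  fixes A :: "real^'n^'n"
  assumes pos: "\<forall>k \<le> CARD('n). coeff (charpoly A) k > 0" and s: "s \<ge> 0"
  shows "poly (charpoly A) s > 0"
proof -
  have d: "degree (charpoly A) \<le> CARD('n)" by (rule charpoly_degree_coeff(1))
  have "poly (charpoly A) s = (\<Sum>i\<le>degree (charpoly A). coeff (charpoly A) i * s ^ i)"
    by (rule poly_altdef)
  also have "\<dots> = coeff (charpoly A) 0 + (\<Sum>i\<in>{..degree (charpoly A)}-{0}. coeff (charpoly A) i * s ^ i)"
    by (subst sum.remove[of _ 0]) auto
  also have "\<dots> > 0"
  proof -
    have "(\<Sum>i\<in>{..degree (charpoly A)}-{0}. coeff (charpoly A) i * s ^ i) \<ge> 0"
      using pos d s by (intro sum_nonneg mult_nonneg_nonneg) (auto intro: less_imp_le)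
    moreover have "coeff (charpoly A) 0 > 0" using pos by auto
    ultimately show ?thesis by linarith
  qed
  finally show ?thesis .
qed

lemma pos_no_eigpair:
  fixes A :: "real^'n^'n"
  assumes pos: "\<forall>k \<le> CARD('n). coeff (charpoly A) k > 0"
  shows "\<not> eigpair A"
  using charpoly_pos[OF pos] eigpair_root unfolding eigpair_def by fastforce

lemma no_eigpair_lyap:
  fixes A :: "real^'n^'n"
  assumes "metzler A" "\<not> eigpair A"
  shows "\<exists>v. (\<forall>i. v$i > 0) \<and> (\<forall>j. (v v* A)$j < 0)"
  using assms brouwer_eig gordan by blast

lemma lyap_pos_coeffs:
  fixes A :: "real^'n^'n"
  assumes met: "metzler A" and v: "\<forall>i. v$i > 0" and neg: "\<forall>j. (v v* A)$j < 0"
  shows "\<forall>k \<le> CARD('n). coeff (charpoly A) k > 0"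
proof -
  have d: "degree (charpoly A) = CARD('n)"
    using charpoly_degree_coeff[of A] by (metis le_antisym le_degree zero_neq_one)
  have l: "lead_coeff (charpoly A) > 0" using d charpoly_degree_coeff(2)[of A] by simp
  have "\<forall>z. croot (charpoly A) z \<longrightarrow> Re z < 0"
    using gershgorin_left[OF met v neg] by blast
  then show ?thesis using pos_coeffs_of_roots[OF l] d by simp
qed


(* ---- TS1 ---- *)


lemma sigma_eq:
  assumes "\<forall>r. \<exists>t\<in>T. t > r"
  shows "sigma_ts T t = Inf {s\<in>T. s > t}"
  using assms unfolding sigma_ts_def by auto

lemma sigma_lower:
  assumes "\<forall>r. \<exists>t\<in>T. t > r" "s \<in> T" "s > t"
  shows "sigma_ts T t \<le> s"
  unfolding sigma_eq[OF assms(1)] using assms(2,3) by (intro cInf_lower) (auto intro: bdd_belowI[of _ t])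

lemma sigma_ge:
  assumes "\<forall>r. \<exists>t\<in>T. t > r"
  shows "sigma_ts T t \<ge> t"
  unfolding sigma_eq[OF assms(1)] using assms by (intro cInf_greatest) auto

lemma sigma_in:
  assumes "closed T" "\<forall>r. \<exists>t\<in>T. t > r" "t \<in> T"
  shows "sigma_ts T t \<in> T"
proof (cases "sigma_ts T t = t")
  case True then show ?thesis using assms by simp
next
  case False
  let ?S = "{s\<in>T. s > t}"
  have ne: "?S \<noteq> {}" using assms by auto
  have "Inf ?S \<in> closure ?S"
    by (rule closure_contains_Inf[OF ne]) (auto intro: bdd_belowI[of _ t])
  also have "closure ?S \<subseteq> T" using assms(1) by (intro closure_minimal) auto
  finally show ?thesis using sigma_eq[OF assms(2)] by simp
qed

lemma sigma_gap:
  assumes "\<forall>r. \<exists>t\<in>T. t > r" "u \<in> T" "t < u"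
  shows "sigma_ts T t \<le> u"
  using sigma_lower[OF assms] .

lemma sigma_dense:
  assumes "\<forall>r. \<exists>t\<in>T. t > r" "sigma_ts T t = t" "d > 0"
  shows "\<exists>u\<in>T. t < u \<and> u < t + d"
proof -
  have "Inf {s\<in>T. s > t} < t + d" using assms sigma_eq[OF assms(1)] by simp
  then obtain u where "u \<in> {s\<in>T. s > t}" "u < t + d"
    using assms(1) by (subst (asm) cInf_less_iff) (auto intro: bdd_belowI[of _ t])
  then show ?thesis by auto
qed

lemma sigma_restrict:
  assumes "t0 \<le> t"
  shows "sigma_ts {s\<in>T. t0 \<le> s} t = sigma_ts T t"
proof -
  have "{s\<in>{s\<in>T. t0 \<le> s}. s > t} = {s\<in>T. s > t}" using assms by auto
  then show ?thesis unfolding sigma_ts_def by (simp only:)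
qed

definition rhat :: "real set \<Rightarrow> real \<Rightarrow> real \<Rightarrow> real" where
  "rhat T t0 \<tau> = Sup {u\<in>T. t0 \<le> u \<and> u \<le> \<tau>}"

lemma rhat_props:
  assumes "closed T" "t0 \<in> T" "t0 \<le> \<tau>"
  shows "rhat T t0 \<tau> \<in> T" "t0 \<le> rhat T t0 \<tau>" "rhat T t0 \<tau> \<le> \<tau>"
proof -
  let ?S = "{u\<in>T. t0 \<le> u \<and> u \<le> \<tau>}"
  have ne: "?S \<noteq> {}" using assms by auto
  have bdd: "bdd_above ?S" by (auto intro: bdd_aboveI[of _ \<tau>])
  have cl: "closed ?S"
  proof -
    have "?S = T \<inter> {t0..\<tau>}" by auto
    then show ?thesis using assms(1) by auto
  qed
  have "Sup ?S \<in> ?S" by (rule closed_contains_Sup[OF ne bdd cl])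
  then show "rhat T t0 \<tau> \<in> T" "t0 \<le> rhat T t0 \<tau>" "rhat T t0 \<tau> \<le> \<tau>"
    unfolding rhat_def by auto
qed

lemma rhat_upper:
  assumes "u \<in> T" "t0 \<le> u" "u \<le> \<tau>"
  shows "u \<le> rhat T t0 \<tau>"
  unfolding rhat_def using assms by (intro cSup_upper) (auto intro: bdd_aboveI[of _ \<tau>])

lemma rhat_mono:
  assumes "closed T" "t0 \<in> T" "t0 \<le> a" "a \<le> b"
  shows "rhat T t0 a \<le> rhat T t0 b"
  using rhat_props[OF assms(1,2,3)] assms by (intro rhat_upper) auto

lemma rhat_gap:
  assumes "closed T" "\<forall>r. \<exists>t\<in>T. t > r" "t0 \<in> T" "t \<in> T" "t0 \<le> t" "t \<le> \<tau>" "\<tau> < sigma_ts T t"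
  shows "rhat T t0 \<tau> = t"
proof -
  have r: "rhat T t0 \<tau> \<in> T" "rhat T t0 \<tau> \<le> \<tau>" using rhat_props[OF assms(1,3)] assms by auto
  have "t \<le> rhat T t0 \<tau>" using assms by (intro rhat_upper) auto
  moreover have "\<not> rhat T t0 \<tau> > t"
    using sigma_lower[OF assms(2) r(1)] r(2) assms(7) by force
  ultimately show ?thesis by simp
qed


(* ---- TS2 ---- *)


primrec hh :: "real set \<Rightarrow> real \<Rightarrow> nat \<Rightarrow> real \<Rightarrow> real" where
  "hh T t0 0 t = 1"
| "hh T t0 (Suc k) t = integral {t0..t} (\<lambda>\<tau>. hh T t0 k (rhat T t0 \<tau>))"

lemma int_const: "a \<le> b \<Longrightarrow> integral {a..b} (\<lambda>x. c) = (b - a) * (c::real)"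
  by simp

locale tsc =
  fixes T :: "real set" and t0 :: real
  assumes cl: "closed T" and unb: "\<forall>r. \<exists>t\<in>T. t > r" and t0T: "t0 \<in> T"
begin

abbreviation "h \<equiv> hh T t0"
abbreviation "r \<equiv> rhat T t0"

lemma r_props: "t0 \<le> \<tau> \<Longrightarrow> r \<tau> \<in> T \<and> t0 \<le> r \<tau> \<and> r \<tau> \<le> \<tau>"
  using rhat_props[OF cl t0T] by blast

lemma r_mono: "t0 \<le> a \<Longrightarrow> a \<le> b \<Longrightarrow> r a \<le> r b"
  using rhat_mono[OF cl t0T] by blast

lemma h_basic: "mono_on {t0..} (h k) \<and> (\<forall>t\<ge>t0. h k t \<ge> 0)"
proof (induction k)
  case 0
  then show ?case by (auto intro: mono_onI)
next
  case (Suc k)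
  have gi: "(\<lambda>\<tau>. h k (r \<tau>)) integrable_on {a..b}" if "t0 \<le> a" for a b
  proof (rule integrable_on_mono_on, rule mono_onI)
    fix x y assume "x \<in> {a..b}" "y \<in> {a..b}" "x \<le> y"
    then show "h k (r x) \<le> h k (r y)"
      using Suc.IH r_props[of x] r_props[of y] r_mono[of x y] that
      by (intro mono_onD[of "{t0..}" "h k"]) auto
  qed
  have nn: "h (Suc k) b - h (Suc k) a \<ge> 0" if "t0 \<le> a" "a \<le> b" for a b
  proof -
    have "integral {t0..a} (\<lambda>\<tau>. h k (r \<tau>)) + integral {a..b} (\<lambda>\<tau>. h k (r \<tau>)) =
          integral {t0..b} (\<lambda>\<tau>. h k (r \<tau>))"
      using that gi[of t0] by (intro Henstock_Kurzweil_Integration.integral_combine) auto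
    moreover have "integral {a..b} (\<lambda>\<tau>. h k (r \<tau>)) \<ge> 0"
      using Suc.IH r_props that by (intro integral_nonneg gi) auto
    ultimately show ?thesis by simp
  qed
  have "mono_on {t0..} (h (Suc k))"
    by (rule mono_onI) (use nn in force)
  moreover have "h (Suc k) t \<ge> 0" if "t \<ge> t0" for t
    using nn[of t0 t] that by simp
  ultimately show ?case by blast
qed

lemma h_mono: "t0 \<le> a \<Longrightarrow> a \<le> b \<Longrightarrow> h k a \<le> h k b"
  using h_basic[of k] by (auto intro: mono_onD)

lemma h_nonneg: "t0 \<le> t \<Longrightarrow> h k t \<ge> 0"
  using h_basic[of k] by auto

lemma g_int: "t0 \<le> a \<Longrightarrow> (\<lambda>\<tau>. h k (r \<tau>)) integrable_on {a..b}"
proof (rule integrable_on_mono_on, rule mono_onI)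
  fix x y assume "t0 \<le> a" "x \<in> {a..b}" "y \<in> {a..b}" "x \<le> y"
  then show "h k (r x) \<le> h k (r y)"
    using r_props[of x] r_props[of y] r_mono[of x y] by (intro h_mono) auto
qed

lemma h_diff: "t0 \<le> a \<Longrightarrow> a \<le> b \<Longrightarrow> h (Suc k) b - h (Suc k) a = integral {a..b} (\<lambda>\<tau>. h k (r \<tau>))"
proof -
  assume ab: "t0 \<le> a" "a \<le> b"
  have "integral {t0..a} (\<lambda>\<tau>. h k (r \<tau>)) + integral {a..b} (\<lambda>\<tau>. h k (r \<tau>)) =
        integral {t0..b} (\<lambda>\<tau>. h k (r \<tau>))"
    using ab g_int[of t0] by (intro Henstock_Kurzweil_Integration.integral_combine) auto
  then show ?thesis by simp
qed

lemma h_t0: "h (Suc k) t0 = 0" by simp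

lemma int_bounds:
  fixes f :: "real \<Rightarrow> real"
  assumes "f integrable_on {a..b}" "a \<le> b" "\<And>x. x \<in> {a..b} \<Longrightarrow> lo \<le> f x \<and> f x \<le> hi"
  shows "(b - a) * lo \<le> integral {a..b} f \<and> integral {a..b} f \<le> (b - a) * hi"
proof -
  have "integral {a..b} (\<lambda>x. lo) \<le> integral {a..b} f"
    using assms by (intro integral_le) auto
  moreover have "integral {a..b} f \<le> integral {a..b} (\<lambda>x. hi)"
    using assms by (intro integral_le) auto
  ultimately show ?thesis using assms(2) by simp
qed

text \<open>Lipschitz bound\<close>
lemma h_lip: "t0 \<le> a \<Longrightarrow> a \<le> b \<Longrightarrow> h (Suc k) b - h (Suc k) a \<le> (b - a) * h k b"
proof -
  assume ab: "t0 \<le> a" "a \<le> b"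
  have bnd: "0 \<le> h k (r x) \<and> h k (r x) \<le> h k b" if "x \<in> {a..b}" for x
    using r_props[of x] ab that by (auto intro: h_mono h_nonneg)
  have "integral {a..b} (\<lambda>\<tau>. h k (r \<tau>)) \<le> (b - a) * h k b"
    using int_bounds[OF g_int[of a k b] ab(2) bnd] ab by auto
  then show ?thesis using h_diff[OF ab] by simp
qed

text \<open>Jump at a right-scattered point\<close>
lemma h_jump:
  assumes t: "t \<in> T" "t0 \<le> t"
  shows "h (Suc k) (sigma_ts T t) - h (Suc k) t = (sigma_ts T t - t) * h k t"
proof -
  let ?s = "sigma_ts T t"
  have st: "t \<le> ?s" using sigma_ge[OF unb] by simp
  have "integral {t..?s} (\<lambda>\<tau>. h k (r \<tau>)) = integral {t..?s} (\<lambda>\<tau>. h k t)"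
  proof (rule integral_spike[where S="{?s}"])
    show "negligible {?s}" by simp
    fix x assume "x \<in> {t..?s} - {?s}"
    then show "h k t = h k (r x)" using rhat_gap[OF cl unb t0T t(1) t(2), of x] by auto
  qed
  then show ?thesis using h_diff[OF t(2) st] st by simp
qed

lemma h_pow: "t0 \<le> t \<Longrightarrow> h k t \<le> (t - t0)^k / fact k"
proof (induction k arbitrary: t)
  case 0
  then show ?case by simp
next
  case (Suc k)
  have int: "((\<lambda>\<tau>. (\<tau> - t0)^k / fact k) has_integral ((t - t0)^Suc k / fact (Suc k) - (t0 - t0)^Suc k / fact (Suc k))) {t0..t}"
  proof (rule fundamental_theorem_of_calculus)
    show "t0 \<le> t" using Suc.prems .
    fix x assume "x \<in> {t0..t}"
    have "((\<lambda>\<tau>. (\<tau> - t0)^Suc k / fact (Suc k)) has_real_derivative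
            (real (Suc k) * (x - t0)^k * 1 / fact (Suc k))) (at x within {t0..t})"
      by (intro derivative_eq_intros) auto
    moreover have "real (Suc k) * (x - t0)^k * 1 / fact (Suc k) = (x - t0)^k / fact k"
    proof -
      have f: "(fact (Suc k)::real) = real (Suc k) * fact k" by (rule fact_Suc)
      show ?thesis unfolding f by (simp del: of_nat_Suc)
    qed
    ultimately show "((\<lambda>\<tau>. (\<tau> - t0)^Suc k / fact (Suc k)) has_vector_derivative (x - t0)^k / fact k)
        (at x within {t0..t})"
      by (simp add: has_real_derivative_iff_has_vector_derivative)
  qed
  have "h (Suc k) t = integral {t0..t} (\<lambda>\<tau>. h k (r \<tau>))" by simp
  also have "\<dots> \<le> integral {t0..t} (\<lambda>\<tau>. (\<tau> - t0)^k / fact k)"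
  proof (rule integral_le)
    show "(\<lambda>\<tau>. h k (r \<tau>)) integrable_on {t0..t}" by (rule g_int) simp
    show "(\<lambda>\<tau>. (\<tau> - t0)^k / fact k) integrable_on {t0..t}" using int by blast
    fix x assume x: "x \<in> {t0..t}"
    have "h k (r x) \<le> h k x" using r_props[of x] x by (intro h_mono) auto
    also have "\<dots> \<le> (x - t0)^k / fact k" using Suc.IH x by auto
    finally show "h k (r x) \<le> (x - t0)^k / fact k" .
  qed
  also have "\<dots> = (t - t0)^Suc k / fact (Suc k)" using integral_unique[OF int] by simp
  finally show ?case .
qed

definition Lk :: "nat \<Rightarrow> real \<Rightarrow> real" where
  "Lk k R = (case k of 0 \<Rightarrow> 0 | Suc j \<Rightarrow> R^j / fact j)"

lemma h_lip2:
  assumes "t0 \<le> a" "t0 \<le> b" "a \<le> t0 + R" "b \<le> t0 + R"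
  shows "\<bar>h k b - h k a\<bar> \<le> \<bar>b - a\<bar> * Lk k R"
proof (cases k)
  case 0 then show ?thesis by (simp add: Lk_def)
next
  case (Suc j)
  have R0: "0 \<le> R" using assms by simp
  have w: "h (Suc j) y - h (Suc j) x \<le> (y - x) * (R^j / fact j)" if "t0 \<le> x" "x \<le> y" "y \<le> t0 + R" for x y
  proof -
    have "h (Suc j) y - h (Suc j) x \<le> (y - x) * h j y" by (rule h_lip) (use that in auto)
    also have "\<dots> \<le> (y - x) * (R^j / fact j)"
    proof (intro mult_left_mono)
      have "h j y \<le> (y - t0)^j / fact j" using h_pow that by auto
      also have "\<dots> \<le> R^j / fact j"
        using that by (intro divide_right_mono power_mono) auto
      finally show "h j y \<le> R^j / fact j" .
    qed (use that in auto)
    finally show ?thesis .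
  qed
  show ?thesis
  proof (cases "a \<le> b")
    case True
    then show ?thesis using w[of a b] h_mono[of a b "Suc j"] assms Suc by (auto simp: Lk_def)
  next
    case False
    then show ?thesis using w[of b a] h_mono[of b a "Suc j"] assms Suc by (auto simp: Lk_def)
  qed
qed

lemma h_err:
  assumes t: "t \<in> T" "t0 \<le> t" and s: "s \<in> T" "t0 \<le> s"
    and c: "s \<le> t \<or> sigma_ts T t = t"
  shows "\<bar>h (Suc k) (sigma_ts T t) - h (Suc k) s - (sigma_ts T t - s) * h k t\<bar> \<le> \<bar>t - s\<bar> * \<bar>h k t - h k s\<bar>"
proof -
  let ?s = "sigma_ts T t"
  have J: "h (Suc k) ?s - h (Suc k) t = (?s - t) * h k t" by (rule h_jump[OF t])
  show ?thesis
  proof (cases "s \<le> t")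
    case True
    have bnd: "h k s \<le> h k (r x) \<and> h k (r x) \<le> h k t" if "x \<in> {s..t}" for x
    proof -
      have "s \<le> r x" using that s by (intro rhat_upper) auto
      moreover have "r x \<le> t" using r_props[of x] that s by auto
      ultimately show ?thesis using s by (auto intro: h_mono)
    qed
    have I: "(t - s) * h k s \<le> integral {s..t} (\<lambda>\<tau>. h k (r \<tau>)) \<and> integral {s..t} (\<lambda>\<tau>. h k (r \<tau>)) \<le> (t - s) * h k t"
      by (rule int_bounds[OF g_int[of s k t] True bnd]) (use s in auto)
    have D: "h (Suc k) t - h (Suc k) s = integral {s..t} (\<lambda>\<tau>. h k (r \<tau>))"
      by (rule h_diff) (use s True in auto)
    have "h k s \<le> h k t" using s True by (intro h_mono) auto
    then show ?thesis using J D I True by (auto simp: abs_if algebra_simps)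
  next
    case False
    then have st: "t < s" and sig: "?s = t" using c by auto
    have bnd: "h k t \<le> h k (r x) \<and> h k (r x) \<le> h k s" if "x \<in> {t..s}" for x
    proof -
      have "t \<le> r x" using that t by (intro rhat_upper) auto
      moreover have "r x \<le> s" using r_props[of x] that t by auto
      ultimately show ?thesis using t by (auto intro: h_mono)
    qed
    have I: "(s - t) * h k t \<le> integral {t..s} (\<lambda>\<tau>. h k (r \<tau>)) \<and> integral {t..s} (\<lambda>\<tau>. h k (r \<tau>)) \<le> (s - t) * h k s"
      by (rule int_bounds[OF g_int[of t k s] _ bnd]) (use t st in auto)
    have D: "h (Suc k) s - h (Suc k) t = integral {t..s} (\<lambda>\<tau>. h k (r \<tau>))"
      by (rule h_diff) (use t st in auto)
    have "h k t \<le> h k s" using t st by (intro h_mono) auto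
    then show ?thesis using D I st sig by (auto simp: abs_if algebra_simps)
  qed
qed

end

(* ---- TS3 ---- *)


definition Pw :: "real^'n^'n \<Rightarrow> nat \<Rightarrow> real^'n \<Rightarrow> real^'n" where
  "Pw A k x = ((\<lambda>v. A *v v) ^^ k) x"

lemma Pw_0[simp]: "Pw A 0 x = x" by (simp add: Pw_def)
lemma Pw_Suc: "Pw A (Suc k) x = A *v Pw A k x" by (simp add: Pw_def)

lemma mat_bound: fixes A :: "real^'n^'m" obtains Bm where "Bm > 0" "\<And>v. norm (A *v v) \<le> norm v * Bm"
proof -
  from bounded_linear.pos_bounded[OF matrix_vector_mul_bounded_linear]
  obtain K where "K > 0" "\<forall>x. norm (A *v x) \<le> norm x * K" by blast
  then show ?thesis using that by blast
qed

lemma Pw_bound: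
  assumes "\<And>v. norm (A *v v) \<le> norm v * Bm" "Bm > 0"
  shows "norm (Pw A k x) \<le> Bm^k * norm x"
proof (induction k)
  case 0 then show ?case by simp
next
  case (Suc k)
  have "norm (Pw A (Suc k) x) \<le> norm (Pw A k x) * Bm" unfolding Pw_Suc by (rule assms(1))
  also have "\<dots> \<le> Bm^k * norm x * Bm" using Suc.IH assms(2) by (intro mult_right_mono) auto
  finally show ?case by (simp add: algebra_simps)
qed

definition sol :: "real set \<Rightarrow> real \<Rightarrow> real^'n^'n \<Rightarrow> real^'n \<Rightarrow> real \<Rightarrow> real^'n" where
  "sol T t0 A x0 t = (\<Sum>k. hh T t0 k t *\<^sub>R Pw A k x0)"

context tsc
begin

lemma sol_summable:
  fixes A :: "real^'n^'n"
  assumes "t0 \<le> t"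
  shows "summable (\<lambda>k. norm (h k t *\<^sub>R Pw A k x0))" "summable (\<lambda>k. h k t *\<^sub>R Pw A k x0)"
proof -
  obtain Bm where Bm: "Bm > 0" "\<And>v. norm (A *v v) \<le> norm v * Bm" using mat_bound[of A] by blast
  have le: "norm (h k t *\<^sub>R Pw A k x0) \<le> norm x0 * (inverse (fact k) * (Bm * (t - t0))^k)" for k
  proof -
    have "norm (h k t *\<^sub>R Pw A k x0) = h k t * norm (Pw A k x0)"
      using h_nonneg[OF assms] by simp
    also have "\<dots> \<le> ((t - t0)^k / fact k) * (Bm^k * norm x0)"
      using h_pow[OF assms] Pw_bound[OF Bm(2,1)] h_nonneg[OF assms] assms
      by (intro mult_mono) auto
    also have "\<dots> = norm x0 * (inverse (fact k) * (Bm * (t - t0))^k)"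
      by (simp add: power_mult_distrib divide_inverse)
    finally show ?thesis .
  qed
  show s: "summable (\<lambda>k. norm (h k t *\<^sub>R Pw A k x0))"
    by (rule summable_comparison_test'[OF summable_mult[OF summable_exp]]) (use le in auto)
  show "summable (\<lambda>k. h k t *\<^sub>R Pw A k x0)" by (rule summable_norm_cancel[OF s])
qed

lemma sol_t0: fixes A :: "real^'n^'n" shows "sol T t0 A x0 t0 = x0"
proof -
  have "(\<lambda>k. h k t0 *\<^sub>R Pw A k x0) = (\<lambda>k. if k = 0 then x0 else 0)"
  proof
    fix k show "h k t0 *\<^sub>R Pw A k x0 = (if k = 0 then x0 else 0)" by (cases k) auto
  qed
  then show ?thesis unfolding sol_def using sums_unique[OF sums_single[of 0 "\<lambda>_. x0"]] by simp
qed

lemma sol_A: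
  fixes A :: "real^'n^'n"
  assumes "t0 \<le> t"
  shows "(\<lambda>k. h k t *\<^sub>R Pw A (Suc k) x0) sums (A *v sol T t0 A x0 t)"
proof -
  have "A *v sol T t0 A x0 t = (\<Sum>k. A *v (h k t *\<^sub>R Pw A k x0))"
    unfolding sol_def by (rule bounded_linear.suminf[OF matrix_vector_mul_bounded_linear sol_summable(2)[OF assms]])
  moreover have "summable (\<lambda>k. A *v (h k t *\<^sub>R Pw A k x0))"
    by (rule bounded_linear.summable[OF matrix_vector_mul_bounded_linear sol_summable(2)[OF assms]])
  ultimately show ?thesis
    by (simp add: Pw_Suc matrix_vector_mult_scaleR summable_sums)
qed

lemma Lk_summable:
  assumes "Bm \<ge> 0" "R \<ge> 0"
  shows "summable (\<lambda>k. Lk k R * Bm^Suc k * c)"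
proof -
  have "summable (\<lambda>j. (Bm^2 * c) * (inverse (fact j) * (R * Bm)^j))"
    by (rule summable_mult[OF summable_exp])
  moreover have "(\<lambda>j. Lk (Suc j) R * Bm^Suc (Suc j) * c) = (\<lambda>j. (Bm^2 * c) * (inverse (fact j) * (R * Bm)^j))"
    by (auto simp: fun_eq_iff Lk_def power_mult_distrib divide_inverse power2_eq_square algebra_simps)
  ultimately have "summable (\<lambda>j. Lk (Suc j) R * Bm^Suc (Suc j) * c)" by simp
  then show ?thesis by (subst summable_Suc_iff[symmetric])
qed

lemma sol_delta:
  fixes A :: "real^'n^'n"
  assumes t: "t \<in> T" "t0 \<le> t"
  shows "has_delta_derivative {s\<in>T. t0 \<le> s} (sol T t0 A x0) t (A *v sol T t0 A x0 t)"
  unfolding has_delta_derivative_def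
proof (intro allI impI)
  fix \<epsilon> :: real assume e: "\<epsilon> > 0"
  let ?x = "sol T t0 A x0"
  let ?s = "sigma_ts T t"
  have sD: "sigma_ts {s\<in>T. t0 \<le> s} t = ?s" by (rule sigma_restrict[OF t(2)])
  have st: "t \<le> ?s" by (rule sigma_ge[OF unb])
  obtain Bm where Bm: "Bm > 0" "\<And>v. norm (A *v v) \<le> norm v * Bm" using mat_bound[of A] by blast
  define R where "R = ?s - t0 + 1"
  have R0: "R \<ge> 0" using st t unfolding R_def by simp
  define C where "C = (\<Sum>k. Lk k R * Bm^Suc k * norm x0)"
  have Csum: "summable (\<lambda>k. Lk k R * Bm^Suc k * norm x0)" by (rule Lk_summable) (use Bm R0 in auto)
  have Lk0: "Lk k R \<ge> 0" for k using R0 by (auto simp: Lk_def split: nat.split)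
  have C0: "C \<ge> 0" unfolding C_def using Csum Lk0 Bm by (intro suminf_nonneg) auto
  define \<delta> where "\<delta> = (if t < ?s then min (?s - t) (min 1 (\<epsilon> / (C + 1))) else min 1 (\<epsilon> / (C + 1)))"
  have d0: "\<delta> > 0" unfolding \<delta>_def using e C0 by auto
  show "\<exists>\<delta>>0. \<forall>s\<in>{s\<in>T. t0 \<le> s}. \<bar>s - t\<bar> < \<delta> \<longrightarrow>
      norm (?x (sigma_ts {s\<in>T. t0 \<le> s} t) - ?x s - (sigma_ts {s\<in>T. t0 \<le> s} t - s) *\<^sub>R (A *v ?x t))
      \<le> \<epsilon> * \<bar>sigma_ts {s\<in>T. t0 \<le> s} t - s\<bar>"
  proof (intro exI[of _ \<delta>] conjI ballI impI d0)
    fix s assume sT: "s \<in> {s\<in>T. t0 \<le> s}" and sd: "\<bar>s - t\<bar> < \<delta>"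
    have s: "s \<in> T" "t0 \<le> s" using sT by auto
    have c: "s \<le> t \<or> ?s = t"
    proof (rule ccontr)
      assume "\<not> (s \<le> t \<or> ?s = t)"
      then have "t < s" "t < ?s" using st by auto
      then have "?s \<le> s" using sigma_lower[OF unb s(1)] by auto
      then have "\<delta> \<le> s - t" unfolding \<delta>_def using \<open>t < ?s\<close> by auto
      then show False using sd \<open>t < s\<close> by auto
    qed
    have sd1: "\<bar>s - t\<bar> < 1" and sde: "\<bar>s - t\<bar> < \<epsilon> / (C + 1)"
      using sd unfolding \<delta>_def by (auto split: if_splits)
    have ts_le: "\<bar>t - s\<bar> \<le> \<bar>?s - s\<bar>" using c st by auto
    have sR: "s \<le> t0 + R" "t \<le> t0 + R" using sd1 st unfolding R_def by auto
    let ?e = "\<lambda>k. (h (Suc k) ?s - h (Suc k) s - (?s - s) * h k t) *\<^sub>R Pw A (Suc k) x0"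
    have S1: "(\<lambda>k. (h k ?s - h k s) *\<^sub>R Pw A k x0) sums (?x ?s - ?x s)"
      unfolding sol_def scaleR_left_diff_distrib
      by (intro sums_diff summable_sums sol_summable(2)) (use s t st in auto)
    have S2: "(\<lambda>k. (h (Suc k) ?s - h (Suc k) s) *\<^sub>R Pw A (Suc k) x0) sums (?x ?s - ?x s)"
      using S1 by (subst sums_Suc_iff) simp
    have S3: "(\<lambda>k. ((?s - s) * h k t) *\<^sub>R Pw A (Suc k) x0) sums ((?s - s) *\<^sub>R (A *v ?x t))"
      using sums_scaleR_right[OF sol_A[OF t(2), of A x0], of "?s - s"] by simp
    have Se: "?e sums (?x ?s - ?x s - (?s - s) *\<^sub>R (A *v ?x t))"
      using sums_diff[OF S2 S3] by (simp add: scaleR_left_diff_distrib)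
    have eb: "norm (?e k) \<le> (t - s)^2 * (Lk k R * Bm^Suc k * norm x0)" for k
    proof -
      have "\<bar>h (Suc k) ?s - h (Suc k) s - (?s - s) * h k t\<bar> \<le> \<bar>t - s\<bar> * \<bar>h k t - h k s\<bar>"
        by (rule h_err[OF t s c])
      also have "\<dots> \<le> \<bar>t - s\<bar> * (\<bar>t - s\<bar> * Lk k R)"
        by (intro mult_left_mono) (use h_lip2[OF s(2) t(2) sR] in \<open>auto simp: abs_minus_commute\<close>)
      finally have a: "\<bar>h (Suc k) ?s - h (Suc k) s - (?s - s) * h k t\<bar> \<le> (t - s)^2 * Lk k R"
        by (simp add: power2_eq_square abs_mult_self mult.assoc)
      have "norm (?e k) = \<bar>h (Suc k) ?s - h (Suc k) s - (?s - s) * h k t\<bar> * norm (Pw A (Suc k) x0)"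
        by simp
      also have "\<dots> \<le> ((t - s)^2 * Lk k R) * (Bm^Suc k * norm x0)"
        using Lk0[of k] by (intro mult_mono a Pw_bound[OF Bm(2,1)]) auto
      finally show ?thesis by (simp add: mult.assoc)
    qed
    have "norm (?x ?s - ?x s - (?s - s) *\<^sub>R (A *v ?x t)) = norm (suminf ?e)"
      using sums_unique[OF Se] by simp
    also have "\<dots> \<le> (\<Sum>k. (t - s)^2 * (Lk k R * Bm^Suc k * norm x0))"
      by (rule norm_suminf_le[OF eb summable_mult[OF Csum]])
    also have "\<dots> = (t - s)^2 * C" unfolding C_def using suminf_mult[OF Csum, of "(t - s)^2"] by simp
    also have "\<dots> \<le> \<bar>?s - s\<bar> * (\<bar>t - s\<bar> * C)"
    proof -
      have "(t - s)^2 = \<bar>t - s\<bar> * \<bar>t - s\<bar>" by (simp add: power2_eq_square abs_mult_self)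
      then have "(t - s)^2 * C = \<bar>t - s\<bar> * (\<bar>t - s\<bar> * C)" by simp
      also have "\<dots> \<le> \<bar>?s - s\<bar> * (\<bar>t - s\<bar> * C)"
        using ts_le C0 by (intro mult_right_mono) auto
      finally show ?thesis .
    qed
    also have "\<dots> \<le> \<bar>?s - s\<bar> * \<epsilon>"
    proof (intro mult_left_mono)
      have "\<bar>t - s\<bar> * C \<le> (\<epsilon> / (C + 1)) * C"
        using sde C0 by (intro mult_right_mono) (auto simp: abs_minus_commute)
      also have "\<dots> \<le> \<epsilon>" using e C0 by (simp add: field_simps)
      finally show "\<bar>t - s\<bar> * C \<le> \<epsilon>" .
    qed auto
    finally show "norm (?x (sigma_ts {s\<in>T. t0 \<le> s} t) - ?x s - (sigma_ts {s\<in>T. t0 \<le> s} t - s) *\<^sub>R (A *v ?x t))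
      \<le> \<epsilon> * \<bar>sigma_ts {s\<in>T. t0 \<le> s} t - s\<bar>" unfolding sD by (simp add: mult.commute)
  qed
qed

lemma sol_forward:
  fixes A :: "real^'n^'n"
  shows "forward_solution T A t0 x0 (sol T t0 A x0)"
  unfolding forward_solution_def using sol_t0 sol_delta by blast

end

(* ---- TS4 ---- *)


lemma le_eps_zero:
  fixes a :: real
  assumes "\<And>e. e > 0 \<Longrightarrow> a \<le> e * c" "c \<ge> 0"
  shows "a \<le> 0"
proof (rule ccontr)
  assume "\<not> a \<le> 0"
  then have a: "a > 0" by simp
  show False
  proof (cases "c = 0")
    case True then show False using assms(1)[of 1] a by simp
  next
    case False
    then have c: "c > 0" using assms(2) by simp
    have "a \<le> (a / (2 * c)) * c" using assms(1)[of "a / (2*c)"] a c by simp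
    also have "\<dots> = a / 2" using c by simp
    finally show False using a by simp
  qed
qed

context tsc
begin

lemma delta_rs:
  fixes x :: "real \<Rightarrow> 'a::real_normed_vector"
  assumes d: "has_delta_derivative {s\<in>T. t0 \<le> s} x t d" and t: "t \<in> T" "t0 \<le> t"
  shows "x (sigma_ts T t) = x t + (sigma_ts T t - t) *\<^sub>R d"
proof -
  let ?s = "sigma_ts T t"
  have sD: "sigma_ts {s\<in>T. t0 \<le> s} t = ?s" by (rule sigma_restrict[OF t(2)])
  have "norm (x ?s - x t - (?s - t) *\<^sub>R d) \<le> e * \<bar>?s - t\<bar>" if e0: "e > 0" for e
  proof -
    obtain \<delta> where "\<delta> > 0" and H: "\<forall>s\<in>{s\<in>T. t0 \<le> s}. \<bar>s - t\<bar> < \<delta> \<longrightarrow>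
      norm (x (sigma_ts {s\<in>T. t0 \<le> s} t) - x s - (sigma_ts {s\<in>T. t0 \<le> s} t - s) *\<^sub>R d)
        \<le> e * \<bar>sigma_ts {s\<in>T. t0 \<le> s} t - s\<bar>"
      using d e0 unfolding has_delta_derivative_def by blast
    then show ?thesis using t unfolding sD by auto
  qed
  then have "norm (x ?s - x t - (?s - t) *\<^sub>R d) \<le> 0" by (intro le_eps_zero) auto
  then show ?thesis by (simp add: algebra_simps)
qed

lemma delta_cont:
  fixes x :: "real \<Rightarrow> 'a::real_normed_vector"
  assumes d: "has_delta_derivative {s\<in>T. t0 \<le> s} x t d" and t: "t \<in> T" "t0 \<le> t" and eta: "\<eta> > 0"
  shows "\<exists>\<delta>>0. \<forall>u\<in>T. t0 \<le> u \<longrightarrow> \<bar>u - t\<bar> < \<delta> \<longrightarrow> norm (x t - x u) \<le> \<eta>"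
proof -
  let ?s = "sigma_ts T t"
  have sD: "sigma_ts {s\<in>T. t0 \<le> s} t = ?s" by (rule sigma_restrict[OF t(2)])
  have st: "t \<le> ?s" by (rule sigma_ge[OF unb])
  define \<mu> where "\<mu> = ?s - t"
  have mu0: "\<mu> \<ge> 0" using st by (simp add: \<mu>_def)
  define e where "e = \<eta> / (4 * (\<mu> + 1))"
  have e0: "e > 0" using eta mu0 by (simp add: e_def)
  obtain \<delta>1 where d1: "\<delta>1 > 0" and H: "\<forall>s\<in>{s\<in>T. t0 \<le> s}. \<bar>s - t\<bar> < \<delta>1 \<longrightarrow>
      norm (x ?s - x s - (?s - s) *\<^sub>R d) \<le> e * \<bar>?s - s\<bar>"
    using d e0 unfolding has_delta_derivative_def sD by blast
  define \<delta> where "\<delta> = min \<delta>1 (min 1 (\<eta> / (2 * (norm d + e + 1))))"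
  have dpos: "\<delta> > 0" unfolding \<delta>_def using d1 eta e0 by (auto intro!: divide_pos_pos add_nonneg_pos)
  show ?thesis
  proof (intro exI[of _ \<delta>] conjI dpos ballI impI)
    fix u assume u: "u \<in> T" "t0 \<le> u" "\<bar>u - t\<bar> < \<delta>"
    have h1: "norm (x ?s - x u - (?s - u) *\<^sub>R d) \<le> e * \<bar>?s - u\<bar>"
      using H u unfolding \<delta>_def by auto
    have h2: "norm (x ?s - x t - (?s - t) *\<^sub>R d) \<le> e * \<bar>?s - t\<bar>"
      using H t d1 by auto
    define a where "a = x ?s - x u - (?s - u) *\<^sub>R d"
    define b where "b = x ?s - x t - (?s - t) *\<^sub>R d"
    have eq: "x t - x u = (a - b) + (t - u) *\<^sub>R d"
      by (simp add: a_def b_def algebra_simps)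
    have "norm (x t - x u) \<le> norm (a - b) + norm ((t - u) *\<^sub>R d)"
      unfolding eq by (rule norm_triangle_ineq)
    also have "\<dots> \<le> norm a + norm b + \<bar>t - u\<bar> * norm d"
      using norm_triangle_ineq4[of a b] by simp
    also have "\<dots> \<le> e * \<bar>?s - u\<bar> + e * \<bar>?s - t\<bar> + \<bar>t - u\<bar> * norm d"
      using h1 h2 unfolding a_def b_def by linarith
    also have "\<dots> \<le> e * (2 * \<mu> + \<bar>t - u\<bar>) + \<bar>t - u\<bar> * norm d"
    proof -
      have "\<bar>?s - u\<bar> \<le> \<mu> + \<bar>t - u\<bar>" "\<bar>?s - t\<bar> = \<mu>" using st by (auto simp: \<mu>_def)
      then have i1: "e * \<bar>?s - u\<bar> \<le> e * (\<mu> + \<bar>t - u\<bar>)" and i2: "e * \<bar>?s - t\<bar> = e * \<mu>"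
        using e0 by (auto intro: mult_left_mono)
      have "e * (2 * \<mu> + \<bar>t - u\<bar>) = e * (\<mu> + \<bar>t - u\<bar>) + e * \<mu>" by (simp add: algebra_simps)
      then show ?thesis using i1 i2 by linarith
    qed
    also have "\<dots> = 2 * e * \<mu> + \<bar>t - u\<bar> * (norm d + e)" by (simp add: algebra_simps)
    also have "\<dots> \<le> \<eta> / 2 + \<eta> / 2"
    proof (rule add_mono)
      have "2 * e * \<mu> = \<eta> * \<mu> / (2 * (\<mu> + 1))" using mu0 by (simp add: e_def field_simps)
      also have "\<dots> \<le> \<eta> / 2" using eta mu0 by (simp add: field_simps)
      finally show "2 * e * \<mu> \<le> \<eta> / 2" .
      have Np: "norm d + e + 1 > 0" using e0 norm_ge_zero[of d] by linarith
      have "\<bar>t - u\<bar> < \<delta>" using u by (simp add: abs_minus_commute)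
      then have "\<bar>t - u\<bar> \<le> \<eta> / (2 * (norm d + e + 1))" unfolding \<delta>_def by linarith
      then have "\<bar>t - u\<bar> * (norm d + e) \<le> \<eta> / (2 * (norm d + e + 1)) * (norm d + e)"
        using e0 by (intro mult_right_mono) auto
      also have "\<eta> / (2 * (norm d + e + 1)) * (norm d + e) = (\<eta> / 2) * ((norm d + e) / (norm d + e + 1))"
        using Np by (simp add: field_simps)
      also have "\<dots> \<le> (\<eta> / 2) * 1"
        using eta e0 Np by (intro mult_left_mono) (auto simp: divide_le_eq_1)
      finally show "\<bar>t - u\<bar> * (norm d + e) \<le> \<eta> / 2" by simp
    qed
    finally show "norm (x t - x u) \<le> \<eta>" by simp
  qed
qed

lemma ts_induct:
  assumes P0: "P t0"
    and rs: "\<And>t. t \<in> T \<Longrightarrow> t0 \<le> t \<Longrightarrow> t < sigma_ts T t \<Longrightarrow> P t \<Longrightarrow> P (sigma_ts T t)"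
    and rd: "\<And>t. t \<in> T \<Longrightarrow> t0 \<le> t \<Longrightarrow> sigma_ts T t = t \<Longrightarrow> P t \<Longrightarrow> \<exists>\<delta>>0. \<forall>u\<in>T. t < u \<and> u < t + \<delta> \<longrightarrow> P u"
    and ld: "\<And>t. t \<in> T \<Longrightarrow> t0 < t \<Longrightarrow> (\<forall>u\<in>T. t0 \<le> u \<and> u < t \<longrightarrow> P u) \<Longrightarrow>
               (\<forall>\<delta>>0. \<exists>u\<in>T. t - \<delta> < u \<and> u < t) \<Longrightarrow> P t"
    and t1: "t1 \<in> T" "t0 \<le> t1"
  shows "P t1"
proof (rule ccontr)
  assume nP: "\<not> P t1"
  define S where "S = {u\<in>T. t0 \<le> u \<and> u \<le> t1 \<and> \<not> P u}"
  have Sne: "S \<noteq> {}" using t1 nP by (auto simp: S_def)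
  have Sbdd: "bdd_below S" by (auto simp: S_def intro: bdd_belowI[of _ t0])
  define m where "m = Inf S"
  have mcl: "m \<in> closure S" unfolding m_def by (rule closure_contains_Inf[OF Sne Sbdd])
  have "closure S \<subseteq> T \<inter> {t0..t1}"
    by (rule closure_minimal) (use cl in \<open>auto simp: S_def\<close>)
  then have mT: "m \<in> T" "t0 \<le> m" "m \<le> t1" using mcl by auto
  have below: "P u" if "u \<in> T" "t0 \<le> u" "u < m" for u
  proof (rule ccontr)
    assume "\<not> P u"
    then have "u \<in> S" using that mT by (auto simp: S_def)
    then have "m \<le> u" unfolding m_def using Sbdd by (rule cInf_lower)
    then show False using that by simp
  qed
  have Pm: "P m"
  proof (cases "m = t0")
    case True then show ?thesis using P0 by simp
  next
    case False
    then have mt0: "t0 < m" using mT by simp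
    show ?thesis
    proof (cases "\<forall>\<delta>>0. \<exists>u\<in>T. m - \<delta> < u \<and> u < m")
      case True
      then show ?thesis using ld[OF mT(1) mt0] below by blast
    next
      case False
      then obtain \<delta> where d: "\<delta> > 0" "\<forall>u\<in>T. \<not> (m - \<delta> < u \<and> u < m)" by blast
      define L where "L = {u\<in>T. t0 \<le> u \<and> u < m}"
      have L_eq: "L = T \<inter> {t0..m - \<delta>}" using d by (auto simp: L_def)
      have Lne: "L \<noteq> {}" using mt0 t0T by (auto simp: L_def)
      have Lbdd: "bdd_above L" by (auto simp: L_def intro: bdd_aboveI[of _ m])
      have Lcl: "closed L" unfolding L_eq using cl by auto
      define \<rho> where "\<rho> = Sup L"
      have \<rho>L: "\<rho> \<in> L" unfolding \<rho>_def by (rule closed_contains_Sup[OF Lne Lbdd Lcl])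
      then have \<rho>: "\<rho> \<in> T" "t0 \<le> \<rho>" "\<rho> < m" by (auto simp: L_def)
      have "sigma_ts T \<rho> = m"
      proof (rule antisym)
        show "sigma_ts T \<rho> \<le> m" by (rule sigma_lower[OF unb mT(1) \<rho>(3)])
        show "m \<le> sigma_ts T \<rho>"
          unfolding sigma_eq[OF unb]
        proof (rule cInf_greatest)
          show "{s \<in> T. \<rho> < s} \<noteq> {}" using mT \<rho> by auto
          fix s assume s: "s \<in> {s \<in> T. \<rho> < s}"
          show "m \<le> s"
          proof (rule ccontr)
            assume "\<not> m \<le> s"
            then have "s \<in> L" using s \<rho> by (auto simp: L_def)
            then have "s \<le> \<rho>" unfolding \<rho>_def using Lbdd by (rule cSup_upper)
            then show False using s by simp
          qed
        qed
      qed
      then show ?thesis using rs[OF \<rho>(1,2)] \<rho> below by auto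
    qed
  qed
  have mS: "m \<notin> S" using Pm by (auto simp: S_def)
  have mt1: "m < t1" using mT mS nP t1 by (cases "m = t1") (auto simp: S_def)
  have close: "\<exists>u\<in>S. u < m + e" if "e > 0" for e
  proof -
    have "Inf S < m + e" using that m_def by simp
    then show ?thesis using Sne Sbdd by (subst (asm) cInf_less_iff) auto
  qed
  have sm: "sigma_ts T m = m"
  proof (rule ccontr)
    assume "sigma_ts T m \<noteq> m"
    then have gt: "m < sigma_ts T m" using sigma_ge[OF unb, of m] by simp
    obtain u where u: "u \<in> S" "u < m + (sigma_ts T m - m)" using close[of "sigma_ts T m - m"] gt by auto
    have "m \<le> u" unfolding m_def using u(1) Sbdd by (rule cInf_lower)
    then have "m < u" using u(1) mS by (cases "m = u") auto
    then have "sigma_ts T m \<le> u" using sigma_lower[OF unb] u(1) by (auto simp: S_def)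
    then show False using u(2) by simp
  qed
  obtain \<delta> where d: "\<delta> > 0" "\<forall>u\<in>T. m < u \<and> u < m + \<delta> \<longrightarrow> P u" using rd[OF mT(1,2) sm Pm] by blast
  obtain u where u: "u \<in> S" "u < m + \<delta>" using close[OF d(1)] by blast
  have "m \<le> u" unfolding m_def using u(1) Sbdd by (rule cInf_lower)
  then have "m < u" using u(1) mS by (cases "m = u") auto
  then have "P u" using d u by (auto simp: S_def)
  then show False using u(1) by (auto simp: S_def)
qed

end

(* ---- TS5 ---- *)


context tsc
begin

lemma lyap_decay:
  fixes A :: "real^'n^'n" and x :: "real \<Rightarrow> real^'n"
  assumes fs: "forward_solution T A t0 x0 x"
    and nn: "\<forall>t\<in>T. t0 \<le> t \<longrightarrow> nonneg_vec (x t)"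
    and v: "\<forall>i. v$i > 0" and c: "c > 0" and vc: "\<forall>j. (v v* A)$j \<le> - c * v$j"
    and t: "t \<in> T" "t0 \<le> t"
  shows "inner v (x t) \<le> exp (- (c/2) * (t - t0)) * inner v x0"
proof -
  define \<alpha> where "\<alpha> = c / 2"
  have a0: "\<alpha> > 0" using c by (simp add: \<alpha>_def)
  define y where "y s = inner v (x s)" for s
  have x0: "x t0 = x0" using fs by (simp add: forward_solution_def)
  have der: "has_delta_derivative {s\<in>T. t0 \<le> s} x s (A *v x s)" if "s \<in> T" "t0 \<le> s" for s
    using fs that by (simp add: forward_solution_def)
  have ynn: "y s \<ge> 0" if "s \<in> T" "t0 \<le> s" for s
  proof -
    have "nonneg_vec (x s)" using nn that by auto
    then show ?thesis unfolding y_def inner_vec_def using v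
      by (intro sum_nonneg) (auto simp: nonneg_vec_def less_imp_le)
  qed
  have drop: "inner v (A *v x s) \<le> - c * y s" if "s \<in> T" "t0 \<le> s" for s
  proof -
    have xs: "nonneg_vec (x s)" using nn that by auto
    have "inner v (A *v x s) = inner (v v* A) (x s)" by (simp add: dot_lmul_matrix)
    also have "\<dots> = (\<Sum>j\<in>UNIV. (v v* A)$j * (x s)$j)" by (simp add: inner_vec_def)
    also have "\<dots> \<le> (\<Sum>j\<in>UNIV. (- c * v$j) * (x s)$j)"
      using vc xs by (intro sum_mono mult_right_mono) (auto simp: nonneg_vec_def)
    also have "\<dots> = - c * y s" by (simp add: y_def inner_vec_def sum_distrib_left algebra_simps)
    finally show ?thesis .
  qed
  have y0nn: "y t0 \<ge> 0" using ynn t0T by simp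
  have nv1: "norm v + 1 > 0" using norm_ge_zero[of v] by linarith
  have main: "y t \<le> (y t0 + \<eta>) * exp (- \<alpha> * (t - t0))" if eta: "\<eta> > 0" for \<eta>
  proof -
    define B where "B s = (y t0 + \<eta>) * exp (- \<alpha> * (s - t0))" for s
    have Bpos: "B s > 0" for s unfolding B_def using eta y0nn by simp
    have Bshift: "B u = B s * exp (- \<alpha> * (u - s))" for u s
    proof -
      have "- \<alpha> * (u - t0) = - \<alpha> * (s - t0) + - \<alpha> * (u - s)" by (simp add: algebra_simps)
      then have "exp (- \<alpha> * (u - t0)) = exp (- \<alpha> * (s - t0)) * exp (- \<alpha> * (u - s))"
        by (simp add: exp_add[symmetric])
      then show ?thesis unfolding B_def by simp
    qed
    have "y t \<le> B t"
    proof (rule ts_induct[where P="\<lambda>s. y s \<le> B s"])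
      show "y t0 \<le> B t0" using eta by (simp add: B_def)
    next
      fix s assume s: "s \<in> T" "t0 \<le> s" "s < sigma_ts T s" and Ps: "y s \<le> B s"
      let ?m = "sigma_ts T s - s"
      have m0: "?m > 0" using s by simp
      have "x (sigma_ts T s) = x s + ?m *\<^sub>R (A *v x s)" by (rule delta_rs[OF der[OF s(1,2)] s(1,2)])
      then have "y (sigma_ts T s) = y s + ?m * inner v (A *v x s)" by (simp add: y_def inner_add_right)
      also have "\<dots> \<le> y s + ?m * (- c * y s)" using drop[OF s(1,2)] m0 by (intro add_left_mono mult_left_mono) auto
      finally have ys: "y (sigma_ts T s) \<le> (1 - c * ?m) * y s" by (simp add: algebra_simps)
      show "y (sigma_ts T s) \<le> B (sigma_ts T s)"
      proof (cases "1 - c * ?m \<ge> 0")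
        case True
        have "(1 - c * ?m) * y s \<le> (1 - c * ?m) * B s" using Ps True by (intro mult_left_mono)
        also have "\<dots> \<le> exp (- \<alpha> * ?m) * B s"
        proof (intro mult_right_mono)
          have "1 - c * ?m \<le> exp (- (c * ?m))" using exp_ge_add_one_self[of "- (c * ?m)"] by simp
          also have "\<dots> \<le> exp (- \<alpha> * ?m)" using m0 c by (simp add: \<alpha>_def)
          finally show "1 - c * ?m \<le> exp (- \<alpha> * ?m)" .
        qed (use Bpos in \<open>auto intro: less_imp_le\<close>)
        also have "\<dots> = B (sigma_ts T s)" using Bshift[of "sigma_ts T s" s] by simp
        finally show ?thesis using ys by simp
      next
        case False
        then have "(1 - c * ?m) * y s \<le> 0" using ynn[OF s(1,2)] by (simp add: mult_nonpos_nonneg)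
        then show ?thesis using ys Bpos[of "sigma_ts T s"] by simp
      qed
    next
      fix s assume s: "s \<in> T" "t0 \<le> s" and sd: "sigma_ts T s = s" and Ps: "y s \<le> B s"
      define e where "e = \<alpha> * B s / (norm v + 1)"
      have e0: "e > 0" unfolding e_def using a0 Bpos[of s] by (simp add: add_nonneg_pos)
      obtain \<delta>1 where d1: "\<delta>1 > 0" and H: "\<forall>u\<in>{u\<in>T. t0 \<le> u}. \<bar>u - s\<bar> < \<delta>1 \<longrightarrow>
          norm (x (sigma_ts {u\<in>T. t0 \<le> u} s) - x u - (sigma_ts {u\<in>T. t0 \<le> u} s - u) *\<^sub>R (A *v x s))
            \<le> e * \<bar>sigma_ts {u\<in>T. t0 \<le> u} s - u\<bar>"
        using der[OF s(1,2)] e0 unfolding has_delta_derivative_def by blast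
      have sD: "sigma_ts {u\<in>T. t0 \<le> u} s = s" using sigma_restrict[OF s(2)] sd by simp
      show "\<exists>\<delta>>0. \<forall>u\<in>T. s < u \<and> u < s + \<delta> \<longrightarrow> y u \<le> B u"
      proof (intro exI[of _ "min \<delta>1 (1 / c)"] conjI ballI impI)
        show "min \<delta>1 (1 / c) > 0" using d1 c by simp
        fix u assume u: "u \<in> T" "s < u \<and> u < s + min \<delta>1 (1 / c)"
        have uD: "u \<in> {u\<in>T. t0 \<le> u}" using u s by auto
        have E: "norm (x s - x u - (s - u) *\<^sub>R (A *v x s)) \<le> e * (u - s)"
          using H uD u unfolding sD by auto
        have "x u = x s + (u - s) *\<^sub>R (A *v x s) - (x s - x u - (s - u) *\<^sub>R (A *v x s))"
          by (simp add: algebra_simps)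
        then have yu: "y u = y s + (u - s) * inner v (A *v x s) - inner v (x s - x u - (s - u) *\<^sub>R (A *v x s))"
          by (simp add: y_def inner_diff_right inner_add_right algebra_simps)
        have "\<bar>inner v (x s - x u - (s - u) *\<^sub>R (A *v x s))\<bar> \<le> norm v * (e * (u - s))"
          using Cauchy_Schwarz_ineq2[of v] E order.trans mult_left_mono norm_ge_zero by metis
        also have "\<dots> \<le> \<alpha> * B s * (u - s)"
        proof -
          have "norm v * e = \<alpha> * B s * (norm v / (norm v + 1))"
            unfolding e_def by (simp add: field_simps)
          also have "\<dots> \<le> \<alpha> * B s * 1"
            using a0 Bpos[of s] nv1 by (intro mult_left_mono) (auto simp: divide_le_eq_1)
          finally show ?thesis using u by (simp add: mult.assoc[symmetric] mult_right_mono)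
        qed
        finally have err: "\<bar>inner v (x s - x u - (s - u) *\<^sub>R (A *v x s))\<bar> \<le> \<alpha> * B s * (u - s)" .
        have cu: "1 - c * (u - s) \<ge> 0"
        proof -
          have "u - s < 1 / c" using u min.cobounded2[of \<delta>1 "1/c"] by linarith
          then have "c * (u - s) < 1" using c by (simp add: field_simps)
          then show ?thesis by simp
        qed
        have "y u \<le> y s + (u - s) * (- c * y s) + \<alpha> * B s * (u - s)"
          using yu err drop[OF s(1,2)] u by (smt (verit) mult_left_mono)
        also have "\<dots> = (1 - c * (u - s)) * y s + \<alpha> * B s * (u - s)" by (simp add: algebra_simps)
        also have "\<dots> \<le> (1 - c * (u - s)) * B s + \<alpha> * B s * (u - s)"
          using cu Ps by (simp add: mult_left_mono)
        also have "\<dots> = B s * (1 + (- \<alpha> * (u - s)))" by (simp add: \<alpha>_def algebra_simps)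
        also have "\<dots> \<le> B s * exp (- \<alpha> * (u - s))"
          using Bpos[of s] exp_ge_add_one_self[of "- \<alpha> * (u - s)"] by (intro mult_left_mono) auto
        also have "\<dots> = B u" using Bshift[of u s] by simp
        finally show "y u \<le> B u" .
      qed
    next
      fix s assume s: "s \<in> T" "t0 < s" and below: "\<forall>u\<in>T. t0 \<le> u \<and> u < s \<longrightarrow> y u \<le> B u"
        and ld: "\<forall>\<delta>>0. \<exists>u\<in>T. s - \<delta> < u \<and> u < s"
      have "y s - B s \<le> \<gamma> * 2" if g: "\<gamma> > 0" for \<gamma>
      proof -
        obtain \<delta>1 where d1: "\<delta>1 > 0" and H1: "\<forall>u\<in>T. t0 \<le> u \<longrightarrow> \<bar>u - s\<bar> < \<delta>1 \<longrightarrow> norm (x s - x u) \<le> \<gamma> / (norm v + 1)"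
          using delta_cont[OF der[of s] _ _ divide_pos_pos[OF g, of "norm v + 1"]] s
          by (auto simp: add_nonneg_pos)
        have "isCont B s" unfolding B_def by (intro continuous_intros)
        then obtain \<delta>2 where d2: "\<delta>2 > 0" and H2: "\<forall>u. u \<noteq> s \<and> \<bar>u - s\<bar> < \<delta>2 \<longrightarrow> \<bar>B u - B s\<bar> < \<gamma>"
          unfolding isCont_def LIM_eq using g by (auto simp: dist_real_def)
        obtain u where u: "u \<in> T" "s - min (min \<delta>1 \<delta>2) (s - t0) < u" "u < s"
          using ld d1 d2 s by (metis min_less_iff_conj diff_gt_0_iff_gt)
        have ut0: "t0 \<le> u" using u by auto
        have "y u \<le> B u" using below u ut0 by auto
        moreover have "\<bar>B u - B s\<bar> < \<gamma>" using H2 u by auto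
        moreover have "\<bar>y s - y u\<bar> \<le> \<gamma>"
        proof -
          have "\<bar>y s - y u\<bar> = \<bar>inner v (x s - x u)\<bar>" by (simp add: y_def inner_diff_right)
          also have "\<dots> \<le> norm v * norm (x s - x u)" by (rule Cauchy_Schwarz_ineq2)
          also have "\<dots> \<le> norm v * (\<gamma> / (norm v + 1))"
            using H1 u ut0 by (intro mult_left_mono) auto
          also have "\<dots> \<le> \<gamma>"
          proof -
            have "norm v * (\<gamma> / (norm v + 1)) = \<gamma> * (norm v / (norm v + 1))" by simp
            also have "\<dots> \<le> \<gamma> * 1" using g nv1 by (intro mult_left_mono) (auto simp: divide_le_eq_1)
            finally show ?thesis by simp
          qed
          finally show ?thesis .
        qed
        ultimately show ?thesis by linarith
      qed
      then have "y s - B s \<le> 0" by (intro le_eps_zero) auto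
      then show "y s \<le> B s" by simp
    qed (use t in auto)
    then show ?thesis unfolding B_def by simp
  qed
  have "y t - y t0 * exp (- \<alpha> * (t - t0)) \<le> 0"
    by (rule le_eps_zero[where c="exp (- \<alpha> * (t - t0))"]) (use main in \<open>auto simp: algebra_simps\<close>)
  then show ?thesis using x0 by (simp add: y_def \<alpha>_def mult.commute)
qed

end

(* ---- TS6 ---- *)


lemma mv_axis: fixes A :: "real^'n^'n" shows "(A *v axis j 1)$i = A$i$j"
  unfolding matrix_vector_mult_def axis_def by (simp add: if_distrib cong: if_cong)

lemma pos_metzler:
  fixes A :: "real^'n^'n"
  assumes ts: "time_scale T" and unb: "\<forall>r. \<exists>t\<in>T. t > r" and pos: "positive_system T A"
  shows "metzler A"
  unfolding metzler_def
proof (intro allI impI, rule ccontr)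
  fix i j assume ij: "i \<noteq> j" and neg: "\<not> 0 \<le> A$i$j"
  obtain t0 where t0: "t0 \<in> T" using ts by (auto simp: time_scale_def)
  interpret tsc T t0 using ts unb t0 by unfold_locales (auto simp: time_scale_def)
  define x0 :: "real^'n" where "x0 = axis j 1"
  define x where "x = sol T t0 A x0"
  have fs: "forward_solution T A t0 x0 x" unfolding x_def by (rule sol_forward)
  have x0nn: "nonneg_vec x0" by (auto simp: x0_def nonneg_vec_def axis_def)
  have nn: "nonneg_vec (x t)" if "t \<in> T" "t0 \<le> t" for t
    using pos t0 x0nn fs that unfolding positive_system_def by blast
  have "\<forall>t\<in>T. t0 \<le> t \<longrightarrow> has_delta_derivative {s\<in>T. t0 \<le> s} x t (A *v x t)"
    using fs unfolding forward_solution_def by blast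
  then have der: "has_delta_derivative {s\<in>T. t0 \<le> s} x t0 (A *v x t0)" using t0 by blast
  have xt0: "x t0 = x0" using fs by (simp add: forward_solution_def)
  have x0i: "x0$i = 0" using ij by (simp add: x0_def axis_def)
  have Ax0: "(A *v x0)$i = A$i$j" by (simp add: x0_def mv_axis)
  show False
  proof (cases "t0 < sigma_ts T t0")
    case True
    have "x (sigma_ts T t0) = x t0 + (sigma_ts T t0 - t0) *\<^sub>R (A *v x t0)"
      by (rule delta_rs[OF der t0]) simp
    then have "(x (sigma_ts T t0))$i = (sigma_ts T t0 - t0) * A$i$j"
      using xt0 x0i Ax0 by simp
    moreover have "(sigma_ts T t0 - t0) * A$i$j < 0" using True neg by (simp add: mult_pos_neg)
    moreover have "nonneg_vec (x (sigma_ts T t0))"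
      using nn sigma_in[OF cl unb t0] True by auto
    then have "(x (sigma_ts T t0))$i \<ge> 0" unfolding nonneg_vec_def by blast
    ultimately show False by linarith
  next
    case False
    then have sd: "sigma_ts T t0 = t0" using sigma_ge[OF unb, of t0] by simp
    have sD: "sigma_ts {s\<in>T. t0 \<le> s} t0 = t0" using sigma_restrict[of t0 t0 T] sd by simp
    define e where "e = - A$i$j / 2"
    have e0: "e > 0" using neg by (simp add: e_def)
    obtain \<delta> where d: "\<delta> > 0" and H: "\<forall>s\<in>{s\<in>T. t0 \<le> s}. \<bar>s - t0\<bar> < \<delta> \<longrightarrow>
        norm (x (sigma_ts {s\<in>T. t0 \<le> s} t0) - x s - (sigma_ts {s\<in>T. t0 \<le> s} t0 - s) *\<^sub>R (A *v x t0))
          \<le> e * \<bar>sigma_ts {s\<in>T. t0 \<le> s} t0 - s\<bar>"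
      using der e0 unfolding has_delta_derivative_def by blast
    obtain u where u: "u \<in> T" "t0 < u" "u < t0 + \<delta>" using sigma_dense[OF unb sd d] by blast
    have "norm (x t0 - x u - (t0 - u) *\<^sub>R (A *v x t0)) \<le> e * (u - t0)"
      using H u unfolding sD by auto
    moreover have "\<bar>(x t0 - x u - (t0 - u) *\<^sub>R (A *v x t0))$i\<bar> \<le> norm (x t0 - x u - (t0 - u) *\<^sub>R (A *v x t0))"
      by (rule component_le_norm_cart)
    ultimately have "\<bar>- (x u)$i - (t0 - u) * A$i$j\<bar> \<le> e * (u - t0)"
      using xt0 x0i Ax0 by simp
    then have "(x u)$i \<le> (u - t0) * A$i$j + e * (u - t0)" by (simp add: algebra_simps)
    also have "\<dots> = (u - t0) * (A$i$j / 2)" unfolding e_def by (simp add: field_simps)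
    also have "\<dots> < 0" using u neg by (simp add: mult_pos_neg)
    finally have neg2: "(x u)$i < 0" .
    have "nonneg_vec (x u)" using nn[OF u(1)] u by auto
    then have "(x u)$i \<ge> 0" unfolding nonneg_vec_def by blast
    then show False using neg2 by linarith
  qed
qed

lemma eig_unstable:
  fixes A :: "real^'n^'n"
  assumes ts: "time_scale T" and unb: "\<forall>r. \<exists>t\<in>T. t > r" and eig: "eigpair A"
  shows "\<not> pos_unif_exp_stable T A"
proof
  assume "pos_unif_exp_stable T A"
  then obtain K \<alpha> V where K: "K \<ge> 1" and a: "\<alpha> > 0" and V: "open V" "(0::real^'n) \<in> V"
    and st: "\<forall>t0\<in>T. \<forall>t\<in>T. t0 \<le> t \<longrightarrow> (\<forall>x0. nonneg_vec x0 \<and> x0 \<in> V \<longrightarrow>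
           (\<forall>x. forward_solution T A t0 x0 x \<longrightarrow> norm (x t) \<le> K * exp (- \<alpha> * (t - t0)) * norm x0))"
    unfolding pos_unif_exp_stable_def by blast
  obtain w s where w: "nonneg_vec w" "w \<noteq> 0" "s \<ge> 0" "A *v w = s *\<^sub>R w"
    using eig unfolding eigpair_def by blast
  obtain t0 where t0: "t0 \<in> T" using ts by (auto simp: time_scale_def)
  interpret tsc T t0 using ts unb t0 by unfold_locales (auto simp: time_scale_def)
  obtain \<rho> where rho: "\<rho> > 0" "ball 0 \<rho> \<subseteq> V" using V open_contains_ball by blast
  define x0 where "x0 = (\<rho> / (2 * norm w)) *\<^sub>R w"
  have nw: "norm w > 0" using w by simp
  have nx0: "norm x0 = \<rho> / 2" using nw rho by (simp add: x0_def)
  have x0V: "x0 \<in> V" using rho nx0 by (auto simp: dist_norm)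
  have x0nn: "nonneg_vec x0" using w nw rho by (auto simp: x0_def nonneg_vec_def)
  have Ax0: "A *v x0 = s *\<^sub>R x0" using w by (simp add: x0_def matrix_vector_mult_scaleR)
  have Pk: "Pw A k x0 = s^k *\<^sub>R x0" for k
    by (induction k) (auto simp: Pw_Suc matrix_vector_mult_scaleR Ax0)
  obtain t where t: "t \<in> T" "t > t0 + (\<bar>ln K\<bar> + 1) / \<alpha>" using unb by blast
  have tt0: "t0 \<le> t" using t a by (smt (verit) divide_pos_pos abs_ge_zero)
  have summ: "summable (\<lambda>k. h k t * s^k)"
  proof (rule summable_comparison_test'[OF summable_exp[of "s * (t - t0)"]])
    fix k :: nat
    have "norm (h k t * s^k) = h k t * s^k" using h_nonneg[OF tt0] w by simp
    also have "\<dots> \<le> ((t - t0)^k / fact k) * s^k"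
      using h_pow[OF tt0] w by (intro mult_right_mono) auto
    also have "\<dots> = inverse (fact k) * (s * (t - t0))^k" by (simp add: power_mult_distrib divide_inverse)
    finally show "norm (h k t * s^k) \<le> inverse (fact k) * (s * (t - t0))^k" .
  qed
  have solt: "sol T t0 A x0 t = (\<Sum>k. h k t * s^k) *\<^sub>R x0"
    unfolding sol_def Pk by (simp add: suminf_scaleR_left[OF summ, symmetric])
  have ge1: "(\<Sum>k. h k t * s^k) \<ge> 1"
  proof -
    have "sum (\<lambda>k. h k t * s^k) {..<1} \<le> (\<Sum>k. h k t * s^k)"
      by (rule sum_le_suminf[OF summ]) (use h_nonneg[OF tt0] w in auto)
    then show ?thesis by simp
  qed
  have "norm (sol T t0 A x0 t) \<ge> norm x0"
  proof -
    have "norm (sol T t0 A x0 t) = (\<Sum>k. h k t * s^k) * norm x0" using solt ge1 by simp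
    also have "\<dots> \<ge> 1 * norm x0" using ge1 by (intro mult_right_mono) auto
    finally show ?thesis by simp
  qed
  moreover have "norm (sol T t0 A x0 t) \<le> K * exp (- \<alpha> * (t - t0)) * norm x0"
    using st t0 t tt0 x0nn x0V sol_forward by blast
  moreover have "K * exp (- \<alpha> * (t - t0)) < 1"
  proof -
    have "\<alpha> * (t - t0) > \<bar>ln K\<bar> + 1" using t a by (simp add: field_simps)
    then have "- \<alpha> * (t - t0) < - ln K" by simp
    then have "exp (- \<alpha> * (t - t0)) < exp (- ln K)" by simp
    also have "\<dots> = 1 / K" using K by (simp add: exp_minus inverse_eq_divide)
    finally show ?thesis using K by (simp add: field_simps)
  qed
  moreover have "norm x0 > 0" using nx0 rho by linarith
  ultimately show False by (smt (verit) mult_right_mono mult_less_cancel_right2)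
qed

lemma stable_of_lyap:
  fixes A :: "real^'n^'n"
  assumes ts: "time_scale T" and unb: "\<forall>r. \<exists>t\<in>T. t > r" and pos: "positive_system T A"
    and v: "\<forall>i. v$i > 0" and neg: "\<forall>j. (v v* A)$j < 0"
  shows "pos_unif_exp_stable T A"
proof -
  define c where "c = Min (range (\<lambda>j. - (v v* A)$j / v$j))"
  have c0: "c > 0" unfolding c_def using v neg by (subst Min_gr_iff) (auto intro: divide_neg_pos)
  have vc: "(v v* A)$j \<le> - c * v$j" for j
  proof -
    have "c \<le> - (v v* A)$j / v$j" unfolding c_def by (rule Min_le) auto
    then show ?thesis using v[rule_format, of j] by (simp add: field_simps)
  qed
  define m where "m = Min (range (\<lambda>i. v$i))"
  have m0: "m > 0" unfolding m_def using v by (subst Min_gr_iff) auto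
  have mv: "m \<le> v$i" for i unfolding m_def by (rule Min_le) auto
  define K where "K = max 1 (norm v / m)"
  have bound: "norm (x t) \<le> K * exp (- (c / 2) * (t - t0)) * norm x0"
    if t0: "t0 \<in> T" and t: "t \<in> T" and tt0: "t0 \<le> t" and x0: "nonneg_vec x0"
      and fs: "forward_solution T A t0 x0 x" for t0 t x0 x
  proof -
    interpret tsc T t0 using ts unb t0 by unfold_locales (auto simp: time_scale_def)
    have nn: "\<forall>s\<in>T. t0 \<le> s \<longrightarrow> nonneg_vec (x s)"
      using pos t0 x0 fs unfolding positive_system_def by blast
    have dec: "inner v (x t) \<le> exp (- (c/2) * (t - t0)) * inner v x0"
      by (rule lyap_decay[OF fs nn v c0 _ t tt0]) (use vc in auto)
    have xt: "nonneg_vec (x t)" using nn t tt0 by auto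
    have "norm (x t) \<le> (\<Sum>i\<in>UNIV. \<bar>(x t)$i\<bar>)" by (rule norm_le_l1_cart)
    also have "\<dots> = (\<Sum>i\<in>UNIV. (x t)$i)" using xt by (simp add: nonneg_vec_def)
    also have "\<dots> \<le> (\<Sum>i\<in>UNIV. v$i * (x t)$i) / m"
    proof -
      have "m * (\<Sum>i\<in>UNIV. (x t)$i) \<le> (\<Sum>i\<in>UNIV. v$i * (x t)$i)"
        unfolding sum_distrib_left using xt mv by (intro sum_mono mult_right_mono) (auto simp: nonneg_vec_def)
      then show ?thesis using m0 by (simp add: field_simps)
    qed
    also have "\<dots> = inner v (x t) / m" by (simp add: inner_vec_def)
    also have "\<dots> \<le> exp (- (c/2) * (t - t0)) * inner v x0 / m"
      using dec m0 by (simp add: divide_right_mono)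
    also have "\<dots> \<le> exp (- (c/2) * (t - t0)) * (norm v * norm x0) / m"
      using m0 norm_cauchy_schwarz[of v x0] by (intro divide_right_mono mult_left_mono) auto
    also have "\<dots> = (norm v / m) * exp (- (c/2) * (t - t0)) * norm x0" by simp
    also have "\<dots> \<le> K * exp (- (c/2) * (t - t0)) * norm x0"
      by (intro mult_right_mono) (auto simp: K_def)
    finally show "norm (x t) \<le> K * exp (- (c / 2) * (t - t0)) * norm x0" .
  qed
  show ?thesis unfolding pos_unif_exp_stable_def using c0 bound
    by (intro exI[of _ K] exI[of _ "c/2"] exI[of _ UNIV]) (auto simp: K_def)
qed

theorem theorem4:
  fixes T :: "real set" and A :: "real^'n^'n"
  assumes "time_scale T"
    and "\<forall>r. \<exists>t\<in>T. t > r"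
    and "\<exists>M. \<forall>t\<in>T. graininess T t \<le> M"
    and "positive_system T A"
  shows "pos_unif_exp_stable T A \<longleftrightarrow> (\<forall>k \<le> CARD('n). coeff (charpoly A) k > 0)"
proof
  have met: "metzler A" by (rule pos_metzler[OF assms(1,2,4)])
  {
    assume st: "pos_unif_exp_stable T A"
    have "\<not> eigpair A" using eig_unstable[OF assms(1,2)] st by blast
    then obtain v where "\<forall>i. v$i > 0" "\<forall>j. (v v* A)$j < 0" using no_eigpair_lyap[OF met] by blast
    then show "\<forall>k \<le> CARD('n). coeff (charpoly A) k > 0" by (rule lyap_pos_coeffs[OF met])
  }
  {
    assume "\<forall>k \<le> CARD('n). coeff (charpoly A) k > 0"
    then have "\<not> eigpair A" by (rule pos_no_eigpair)
    then obtain v where "\<forall>i. v$i > 0" "\<forall>j. (v v* A)$j < 0" using no_eigpair_lyap[OF met] by blast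
    then show "pos_unif_exp_stable T A" by (rule stable_of_lyap[OF assms(1,2,4)])
  }
qed


end
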